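(* For every $\alpha\in\{9\beta\mid\beta\in\{57,58,60,61,64,66,69,70,73,76,78,82,84,85,88,93,94,96,100,106,109,114,121,133,138,157,253\}\}$ there exists a quaternary near-extremal Hermitian self-dual code of length $24$ whose weight enumerator is $1+\alpha y^{8}+(18216-8\alpha)y^{10}+(156492+28\alpha)y^{12}+(1147608-56\alpha)y^{14}+(3736557+70\alpha)y^{16}+(6248088-56\alpha)y^{18}+(4399164+28\alpha)y^{20}+(1038312-8\alpha)y^{22}+(32778+\alpha)y^{24}$.
   Context: Let $\mathbb{F}_4=\{0,1,\omega,\omega^2\}$ with $\omega^2=\omega+1$. A quaternary code of length $n$ is a linear subspace of $\mathbb{F}_4^n$; it is Hermitian self-dual if it equals its dual with respect to $\langle x,y\rangle_H=\sum_k x_k y_k^2$. The weight of a vector is the number of nonzero coordinates; the weight enumerator of $D$ is $\sum_{c\in D}y^{\mathrm{wt}(c)}$. A quaternary Hermitian self-dual code of length $24$ is near-extremal if its minimum nonzero weight is $8$. *)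

theory Defs
  imports "HOL-Computational_Algebra.Polynomial"
begin

text \<open>The field F_4 = {0,1,w,w^2} with w^2 = w + 1.\<close>
datatype F4 = F0 | F1 | Fw | Fw2

fun f4_add :: "F4 \<Rightarrow> F4 \<Rightarrow> F4" where
  "f4_add F0 y = y"
| "f4_add x F0 = x"
| "f4_add F1 F1 = F0" | "f4_add F1 Fw = Fw2" | "f4_add F1 Fw2 = Fw"
| "f4_add Fw F1 = Fw2" | "f4_add Fw Fw = F0" | "f4_add Fw Fw2 = F1"
| "f4_add Fw2 F1 = Fw" | "f4_add Fw2 Fw = F1" | "f4_add Fw2 Fw2 = F0"

fun f4_mul :: "F4 \<Rightarrow> F4 \<Rightarrow> F4" where
  "f4_mul F0 y = F0"
| "f4_mul x F0 = F0"
| "f4_mul F1 y = y"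
| "f4_mul x F1 = x"
| "f4_mul Fw Fw = Fw2" | "f4_mul Fw Fw2 = F1"
| "f4_mul Fw2 Fw = F1" | "f4_mul Fw2 Fw2 = Fw"

definition f4_sq :: "F4 \<Rightarrow> F4" where "f4_sq x = f4_mul x x"

definition vadd :: "F4 list \<Rightarrow> F4 list \<Rightarrow> F4 list" where
  "vadd x y = map2 f4_add x y"

definition smul :: "F4 \<Rightarrow> F4 list \<Rightarrow> F4 list" where
  "smul a x = map (f4_mul a) x"

definition zero_word :: "nat \<Rightarrow> F4 list" where
  "zero_word n = replicate n F0"

definition quaternary_code :: "nat \<Rightarrow> F4 list set \<Rightarrow> bool" where
  "quaternary_code n D \<longleftrightarrow> D \<subseteq> {x. length x = n} \<and> zero_word n \<in> D \<and>
     (\<forall>x\<in>D. \<forall>y\<in>D. vadd x y \<in> D) \<and> (\<forall>a. \<forall>x\<in>D. smul a x \<in> D)"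

definition herm_ip :: "F4 list \<Rightarrow> F4 list \<Rightarrow> F4" where
  "herm_ip x y = foldr f4_add (map2 (\<lambda>a b. f4_mul a (f4_sq b)) x y) F0"

definition herm_dual :: "nat \<Rightarrow> F4 list set \<Rightarrow> F4 list set" where
  "herm_dual n D = {y. length y = n \<and> (\<forall>x\<in>D. herm_ip x y = F0)}"

definition herm_self_dual :: "nat \<Rightarrow> F4 list set \<Rightarrow> bool" where
  "herm_self_dual n D \<longleftrightarrow> quaternary_code n D \<and> D = herm_dual n D"

definition wt :: "F4 list \<Rightarrow> nat" where
  "wt x = length (filter (\<lambda>a. a \<noteq> F0) x)"

definition min_weight :: "nat \<Rightarrow> F4 list set \<Rightarrow> nat" where
  "min_weight n D = Min (wt ` (D - {zero_word n}))"

definition weight_enumerator :: "F4 list set \<Rightarrow> int poly" where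
  "weight_enumerator D = (\<Sum>c\<in>D. monom 1 (wt c))"

definition near_extremal_24 :: "F4 list set \<Rightarrow> bool" where
  "near_extremal_24 D \<longleftrightarrow> herm_self_dual 24 D \<and> min_weight 24 D = 8"

end

theory Submission
  imports Defs
begin

fun f4_inv :: "F4 \<Rightarrow> F4" where
  "f4_inv F0 = F0" | "f4_inv F1 = F1" | "f4_inv Fw = Fw2" | "f4_inv Fw2 = Fw"

lemma F4_UNIV: "(UNIV :: F4 set) = {F0, F1, Fw, Fw2}"
  using F4.exhaust by auto

lemma F4_all: "(\<forall>x::F4. P x) \<longleftrightarrow> P F0 \<and> P F1 \<and> P Fw \<and> P Fw2"
  by (metis F4.exhaust)

instance F4 :: finite
  by standard (simp add: F4_UNIV)

instantiation F4 :: field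
begin
definition "0 = F0"
definition "1 = F1"
definition "x + y = f4_add x y"
definition "x - y = f4_add x y"
definition "- x = (x::F4)"
definition "x * y = f4_mul x y"
definition "inverse x = f4_inv x"
definition "x div y = f4_mul x (f4_inv y)"
instance
proof
  fix a b c :: F4
  show "a * b * c = a * (b * c)" by (cases a; cases b; cases c; simp add: times_F4_def)
  show "a * b = b * a" by (cases a; cases b; simp add: times_F4_def)
  show "1 * a = a" by (cases a; simp add: times_F4_def one_F4_def)
  show "a + b + c = a + (b + c)" by (cases a; cases b; cases c; simp add: plus_F4_def)
  show "a + b = b + a" by (cases a; cases b; simp add: plus_F4_def)
  show "0 + a = a" by (cases a; simp add: plus_F4_def zero_F4_def)
  show "- a + a = 0" by (cases a; simp add: plus_F4_def zero_F4_def uminus_F4_def)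
  show "a - b = a + - b" by (simp add: plus_F4_def minus_F4_def uminus_F4_def)
  show "(a + b) * c = a * c + b * c" by (cases a; cases b; cases c; simp add: plus_F4_def times_F4_def)
  show "(0::F4) \<noteq> 1" by (simp add: zero_F4_def one_F4_def)
  show "a \<noteq> 0 \<Longrightarrow> inverse a * a = 1" by (cases a; simp add: zero_F4_def one_F4_def inverse_F4_def times_F4_def)
  show "a div b = a * inverse b" by (simp add: divide_F4_def inverse_F4_def times_F4_def)
  show "inverse (0::F4) = 0" by (simp add: zero_F4_def inverse_F4_def)
qed
end

lemma F0z: "F0 = 0" and F1o: "F1 = 1" by (simp_all add: zero_F4_def one_F4_def)
lemma f4_add_eq: "f4_add x y = x + y" by (simp add: plus_F4_def)
lemma f4_mul_eq: "f4_mul x y = x * y" by (simp add: times_F4_def)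

lemma char2[simp]: "(x::F4) + x = 0"
  by (cases x) (simp_all add: plus_F4_def zero_F4_def)

lemma add_eq0_iff: "(x::F4) + y = 0 \<longleftrightarrow> x = y"
  by (cases x; cases y) (simp_all add: plus_F4_def zero_F4_def)

definition cj :: "F4 \<Rightarrow> F4" where "cj x = x * x"

lemma f4_sq_cj[simp]: "f4_sq x = cj x" by (simp add: f4_sq_def cj_def times_F4_def)

lemma cj_add: "cj (x + y) = cj x + cj y"
  by (cases x; cases y) (simp_all add: cj_def plus_F4_def times_F4_def zero_F4_def one_F4_def)
lemma cj_mult: "cj (x * y) = cj x * cj y"
  by (simp add: cj_def algebra_simps)
lemma cj_cj[simp]: "cj (cj x) = x"
  by (cases x) (simp_all add: cj_def times_F4_def)
lemma cj_0[simp]: "cj 0 = 0" and cj_1[simp]: "cj 1 = 1" by (simp_all add: cj_def)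
lemma cj_eq0[simp]: "cj x = 0 \<longleftrightarrow> x = 0" by (simp add: cj_def)
lemma cj_sum: "cj (\<Sum>i\<in>I. f i) = (\<Sum>i\<in>I. cj (f i))"
  by (induction I rule: infinite_finite_induct) (simp_all add: cj_add)
lemma x_cj_x: "x * cj x = (if x = 0 then 0 else 1)"
  by (cases x) (simp_all add: cj_def times_F4_def zero_F4_def one_F4_def)

lemma F4_neq0: "(x::F4) \<noteq> 0 \<longleftrightarrow> x = F1 \<or> x = Fw \<or> x = Fw2"
  by (cases x) (simp_all add: zero_F4_def)

definition V :: "nat \<Rightarrow> F4 list set" where "V n = {x. length x = n}"

lemma finite_V[simp]: "finite (V n)"
proof -
  have "V n = {xs. set xs \<subseteq> UNIV \<and> length xs = n}" by (simp add: V_def)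
  then show ?thesis using finite_lists_length_eq[of "UNIV::F4 set" n] by simp
qed

lemma card_V: "card (V n) = 4 ^ n"
proof -
  have "V n = {xs. set xs \<subseteq> UNIV \<and> length xs = n}" by (simp add: V_def)
  moreover have "card (UNIV::F4 set) = 4" by (simp add: F4_UNIV)
  ultimately show ?thesis using card_lists_length_eq[of "UNIV::F4 set" n] by simp
qed

lemma V_Suc: "V (Suc n) = (\<lambda>(a, x). a # x) ` (UNIV \<times> V n)"
  by (auto simp: V_def image_iff length_Suc_conv)

lemma sum_V_Suc: "(\<Sum>x\<in>V (Suc n). f x) = (\<Sum>a\<in>UNIV. \<Sum>x\<in>V n. f (a # x))"
proof -
  have inj: "inj_on (\<lambda>(a, x). a # x) (UNIV \<times> V n)" by (auto simp: inj_on_def)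
  have "(\<Sum>x\<in>V (Suc n). f x) = (\<Sum>(a,x)\<in>UNIV \<times> V n. f (a # x))"
    unfolding V_Suc by (subst sum.reindex[OF inj]) (simp add: comp_def case_prod_unfold)
  also have "\<dots> = (\<Sum>a\<in>UNIV. \<Sum>x\<in>V n. f (a # x))"
    by (simp add: sum.cartesian_product)
  finally show ?thesis .
qed

lemma sum_F4: "(\<Sum>a\<in>(UNIV::F4 set). f a) = f F0 + f F1 + f Fw + f Fw2"
  by (simp add: F4_UNIV add.assoc)

lemma V_0: "V 0 = {[]}" by (auto simp: V_def)

declare f4_add_eq[simp] f4_mul_eq[simp]

lemma zero_word_0: "zero_word n = replicate n 0" by (simp add: zero_word_def F0z)

lemma length_vadd[simp]: "length (vadd x y) = min (length x) (length y)" by (simp add: vadd_def)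
lemma length_smul[simp]: "length (smul a x) = length x" by (simp add: smul_def)
lemma nth_vadd[simp]: "i < length x \<Longrightarrow> i < length y \<Longrightarrow> vadd x y ! i = x ! i + y ! i"
  by (simp add: vadd_def)
lemma nth_smul[simp]: "i < length x \<Longrightarrow> smul a x ! i = a * x ! i" by (simp add: smul_def)
lemma vadd_Cons[simp]: "vadd (a # x) (b # y) = (a + b) # vadd x y" by (simp add: vadd_def)
lemma vadd_Nil[simp]: "vadd [] y = []" "vadd x [] = []" by (simp_all add: vadd_def)
lemma smul_Cons[simp]: "smul c (a # x) = (c * a) # smul c x" by (simp add: smul_def)
lemma smul_Nil[simp]: "smul c [] = []" by (simp add: smul_def)

lemma list_eq_nth: "length x = length y \<Longrightarrow> (\<And>i. i < length x \<Longrightarrow> x ! i = y ! i) \<Longrightarrow> x = y"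
  by (simp add: list_eq_iff_nth_eq)

lemma wt_Nil[simp]: "wt [] = 0" by (simp add: wt_def)
lemma wt_Cons[simp]: "wt (a # x) = (if a = 0 then wt x else Suc (wt x))"
  by (simp add: wt_def F0z)
lemma wt_append[simp]: "wt (x @ y) = wt x + wt y" by (simp add: wt_def)
lemma wt_le: "wt x \<le> length x" by (simp add: wt_def)
lemma wt_eq0: "wt x = 0 \<longleftrightarrow> x = replicate (length x) 0"
  by (induction x) auto
lemma wt_smul: "c \<noteq> 0 \<Longrightarrow> wt (smul c x) = wt x"
  by (induction x) auto

lemma herm_ip_Nil[simp]: "herm_ip [] y = 0" "herm_ip x [] = 0"
  by (simp_all add: herm_ip_def F0z)
lemma herm_ip_Cons[simp]: "herm_ip (a # x) (b # y) = a * cj b + herm_ip x y"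
  by (simp add: herm_ip_def)
lemma herm_ip_append: "length x = length x' \<Longrightarrow> herm_ip (x @ y) (x' @ y') = herm_ip x x' + herm_ip y y'"
  by (induction x x' rule: list_induct2) (simp_all add: add.assoc)

lemma herm_ip_sum: "length x = length y \<Longrightarrow> herm_ip x y = (\<Sum>i<length x. x ! i * cj (y ! i))"
  by (induction x y rule: list_induct2) (simp_all add: sum.lessThan_Suc_shift del: sum.lessThan_Suc)

lemma herm_ip_vadd1: "length x = length v \<Longrightarrow> length y = length v \<Longrightarrow>
    herm_ip (vadd x y) v = herm_ip x v + herm_ip y v"
  by (simp add: herm_ip_sum sum.distrib algebra_simps)
lemma herm_ip_smul1: "length x = length v \<Longrightarrow> herm_ip (smul a x) v = a * herm_ip x v"
  by (simp add: herm_ip_sum sum_distrib_left algebra_simps)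
lemma herm_ip_self: "herm_ip x x = (if even (wt x) then 0 else 1)"
  by (induction x) (auto simp: x_cj_x)

fun linr :: "nat \<Rightarrow> F4 list list \<Rightarrow> F4 list \<Rightarrow> F4 list" where
  "linr n (r # rs) (a # m) = vadd (smul a r) (linr n rs m)"
| "linr n _ _ = zero_word n"

definition rowsl :: "nat \<Rightarrow> F4 list list \<Rightarrow> bool" where
  "rowsl n rs \<longleftrightarrow> (\<forall>r\<in>set rs. length r = n)"

lemma rowsl_Cons[simp]: "rowsl n (r # rs) \<longleftrightarrow> length r = n \<and> rowsl n rs"
  by (simp add: rowsl_def)

lemma length_zero_word[simp]: "length (zero_word n) = n" by (simp add: zero_word_def)
lemma nth_zero_word[simp]: "i < n \<Longrightarrow> zero_word n ! i = 0" by (simp add: zero_word_def F0z)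

lemma length_linr[simp]: "rowsl n rs \<Longrightarrow> length (linr n rs m) = n"
  by (induction n rs m rule: linr.induct) auto

lemma nth_linr: "length m = length rs \<Longrightarrow> rowsl n rs \<Longrightarrow> j < n \<Longrightarrow>
    linr n rs m ! j = (\<Sum>i<length m. m ! i * rs ! i ! j)"
proof (induction m rs rule: list_induct2)
  case Nil then show ?case by simp
next
  case (Cons a m r rs)
  then show ?case by (simp add: sum.lessThan_Suc_shift del: sum.lessThan_Suc)
qed

(* the code generated by [I | A] *)
definition code :: "F4 list list \<Rightarrow> F4 list set" where
  "code A = (\<lambda>m. m @ linr (length A) A m) ` V (length A)"

definition sq :: "F4 list list \<Rightarrow> bool" where "sq A \<longleftrightarrow> rowsl (length A) A"

lemma vadd_append: "length x = length x' \<Longrightarrow> vadd (x @ y) (x' @ y') = vadd x x' @ vadd y y'"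
  by (simp add: vadd_def)
lemma smul_append: "smul a (x @ y) = smul a x @ smul a y" by (simp add: smul_def)

lemma linr_vadd: assumes "rowsl n A" "length m = length A" "length m' = length A"
  shows "linr n A (vadd m m') = vadd (linr n A m) (linr n A m')"
  using assms by (intro list_eq_nth) (simp_all add: nth_linr sum.distrib algebra_simps)

lemma linr_smul: assumes "rowsl n A" "length m = length A"
  shows "linr n A (smul a m) = smul a (linr n A m)"
  using assms by (intro list_eq_nth) (simp_all add: nth_linr sum_distrib_left algebra_simps)

lemma linr_zero: assumes "rowsl n A"
  shows "linr n A (zero_word (length A)) = zero_word n"
  using assms by (intro list_eq_nth) (simp_all add: nth_linr)

lemma code_len: "c \<in> code A \<Longrightarrow> sq A \<Longrightarrow> length c = 2 * length A"
  by (auto simp: code_def V_def sq_def)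

lemma quaternary_code_code: assumes "sq A" shows "quaternary_code (2 * length A) (code A)"
proof -
  let ?k = "length A"
  have r: "rowsl ?k A" using assms by (simp add: sq_def)
  have "code A \<subseteq> {x. length x = 2 * ?k}" using code_len assms by blast
  moreover have "zero_word (2 * ?k) \<in> code A"
  proof -
    have "linr ?k A (zero_word ?k) = zero_word ?k" by (rule linr_zero[OF r])
    then have "zero_word (2 * ?k) = zero_word ?k @ linr ?k A (zero_word ?k)"
      by (simp add: zero_word_def replicate_add[symmetric] mult_2)
    then show ?thesis unfolding code_def V_def by auto
  qed
  moreover have "\<forall>x\<in>code A. \<forall>y\<in>code A. vadd x y \<in> code A"
  proof (intro ballI)
    fix x y assume "x \<in> code A" "y \<in> code A"
    then obtain m m' where m: "length m = ?k" "length m' = ?k" "x = m @ linr ?k A m" "y = m' @ linr ?k A m'"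
      by (auto simp: code_def V_def)
    then have "vadd x y = vadd m m' @ linr ?k A (vadd m m')"
      using r by (simp add: vadd_append linr_vadd)
    moreover have "length (vadd m m') = ?k" using m by simp
    ultimately show "vadd x y \<in> code A" unfolding code_def V_def by auto
  qed
  moreover have "\<forall>a. \<forall>x\<in>code A. smul a x \<in> code A"
  proof (intro allI ballI)
    fix a x assume "x \<in> code A"
    then obtain m where m: "length m = ?k" "x = m @ linr ?k A m"
      by (auto simp: code_def V_def)
    then have "smul a x = smul a m @ linr ?k A (smul a m)"
      using r by (simp add: smul_append linr_smul)
    then show "smul a x \<in> code A" unfolding code_def V_def using m by auto
  qed
  ultimately show ?thesis by (simp add: quaternary_code_def)
qed

lemma inj_enc: "inj_on (\<lambda>m. m @ linr (length A) A m) (V (length A))"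
  by (auto simp: inj_on_def V_def)

lemma card_code: "card (code A) = 4 ^ length A"
  unfolding code_def by (simp add: card_image[OF inj_enc] card_V)

lemma finite_code[simp]: "finite (code A)"
  unfolding code_def by simp

definition orthR :: "F4 list list \<Rightarrow> bool" where
  "orthR A \<longleftrightarrow> (\<forall>i<length A. \<forall>l<length A. (\<Sum>j<length A. A!i!j * cj (A!l!j)) = (if i = l then 1 else 0))"
definition orthC :: "F4 list list \<Rightarrow> bool" where
  "orthC A \<longleftrightarrow> (\<forall>l<length A. \<forall>j<length A. (\<Sum>i<length A. cj (A!i!l) * A!i!j) = (if l = j then 1 else 0))"

lemma sum_delta: "j < (k::nat) \<Longrightarrow> (\<Sum>i<k. f i * (if i = j then 1 else (0::F4))) = f j"
  by (simp add: if_distrib cong: if_cong)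

lemma sum_delta': "j < (k::nat) \<Longrightarrow> (\<Sum>i<k. f i * (if j = i then 1 else (0::F4))) = f j"
  by (simp add: if_distrib cong: if_cong)

lemma ip_linr: assumes "sq A" "orthR A" "length m = length A" "length m' = length A"
  shows "herm_ip (linr (length A) A m) (linr (length A) A m') = herm_ip m m'"
proof -
  let ?k = "length A"
  have r: "rowsl ?k A" using assms by (simp add: sq_def)
  have "herm_ip (linr ?k A m) (linr ?k A m') =
      (\<Sum>j<?k. (\<Sum>i<?k. m!i * A!i!j) * cj (\<Sum>l<?k. m'!l * A!l!j))"
    using assms r by (simp add: herm_ip_sum nth_linr)
  also have "\<dots> = (\<Sum>j<?k. \<Sum>l<?k. \<Sum>i<?k. (m!i * cj (m'!l)) * (A!i!j * cj (A!l!j)))"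
    by (simp add: cj_sum cj_mult sum_distrib_left sum_distrib_right algebra_simps)
  also have "\<dots> = (\<Sum>l<?k. \<Sum>j<?k. \<Sum>i<?k. (m!i * cj (m'!l)) * (A!i!j * cj (A!l!j)))"
    by (rule sum.swap)
  also have "\<dots> = (\<Sum>l<?k. \<Sum>i<?k. \<Sum>j<?k. (m!i * cj (m'!l)) * (A!i!j * cj (A!l!j)))"
    by (rule sum.cong[OF refl], rule sum.swap)
  also have "\<dots> = (\<Sum>l<?k. \<Sum>i<?k. (m!i * cj (m'!l)) * (\<Sum>j<?k. A!i!j * cj (A!l!j)))"
    by (simp add: sum_distrib_left)
  also have "\<dots> = (\<Sum>l<?k. \<Sum>i<?k. (m!i * cj (m'!l)) * (if i = l then 1 else 0))"
    using assms(2) by (simp add: orthR_def)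
  also have "\<dots> = (\<Sum>l<?k. m!l * cj (m'!l))"
    by (simp add: sum_delta)
  also have "\<dots> = herm_ip m m'" using assms by (simp add: herm_ip_sum)
  finally show ?thesis .
qed

lemma code_self_orth: assumes "sq A" "orthR A" "c \<in> code A" "c' \<in> code A"
  shows "herm_ip c c' = 0"
proof -
  obtain m m' where "length m = length A" "length m' = length A"
    "c = m @ linr (length A) A m" "c' = m' @ linr (length A) A m'"
    using assms by (auto simp: code_def V_def)
  then show ?thesis using assms by (simp add: herm_ip_append ip_linr)
qed

definition unitv :: "nat \<Rightarrow> nat \<Rightarrow> F4 list" where
  "unitv k i = map (\<lambda>j. if j = i then 1 else 0) [0..<k]"

lemma length_unitv[simp]: "length (unitv k i) = k" by (simp add: unitv_def)

lemma sum_delta_l: "j < (k::nat) \<Longrightarrow> (\<Sum>i<k. (if i = j then 1 else (0::F4)) * f i) = f j"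
  using sum_delta[of j k f] by (simp add: mult.commute)

lemma linr_unitv: assumes "sq A" "i < length A"
  shows "linr (length A) A (unitv (length A) i) = A ! i"
proof -
  have r: "rowsl (length A) A" using assms by (simp add: sq_def)
  have li: "length (A ! i) = length A" using r assms by (simp add: rowsl_def)
  show ?thesis using r assms li
    by (intro list_eq_nth) (simp_all add: nth_linr unitv_def sum_delta_l)
qed

lemma herm_ip_unitv: "i < length h \<Longrightarrow> herm_ip (unitv (length h) i) h = cj (h ! i)"
  by (simp add: herm_ip_sum unitv_def sum_delta_l)

lemma sum_swap_mat:
  "(\<Sum>i<k. (\<Sum>l<k. x l * P l i) * Q i) = (\<Sum>l<k. x l * (\<Sum>i<k. P l i * (Q i :: F4)))"
proof -
  have "(\<Sum>i<k. (\<Sum>l<k. x l * P l i) * Q i) = (\<Sum>i<k. \<Sum>l<k. x l * (P l i * Q i))"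
    by (intro sum.cong refl) (simp add: sum_distrib_right mult.assoc)
  also have "\<dots> = (\<Sum>l<k. \<Sum>i<k. x l * (P l i * Q i))" by (rule sum.swap)
  also have "\<dots> = (\<Sum>l<k. x l * (\<Sum>i<k. P l i * Q i))" by (simp add: sum_distrib_left)
  finally show ?thesis .
qed

lemma dual_sub_code: assumes "sq A" "orthC A"
  shows "herm_dual (2 * length A) (code A) \<subseteq> code A"
proof
  let ?k = "length A"
  have r: "rowsl ?k A" using assms by (simp add: sq_def)
  fix y assume y: "y \<in> herm_dual (2 * ?k) (code A)"
  then have ly: "length y = 2 * ?k" and orth: "\<And>x. x \<in> code A \<Longrightarrow> herm_ip x y = 0"
    by (auto simp: herm_dual_def F0z)
  define h where "h = take ?k y"
  define t where "t = drop ?k y"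
  have yht: "y = h @ t" by (simp add: h_def t_def)
  have lh: "length h = ?k" and lt: "length t = ?k" using ly by (simp_all add: h_def t_def)
  have hi: "h ! i = (\<Sum>l<?k. cj (A!i!l) * t ! l)" if i: "i < ?k" for i
  proof -
    have "unitv ?k i @ linr ?k A (unitv ?k i) \<in> code A"
      unfolding code_def V_def by auto
    then have "herm_ip (unitv ?k i @ A ! i) (h @ t) = 0"
      using orth yht linr_unitv[OF assms(1) i] by simp
    moreover have "length (A ! i) = ?k" using r i by (simp add: rowsl_def)
    moreover have "herm_ip (unitv ?k i @ A ! i) (h @ t) = herm_ip (unitv ?k i) h + herm_ip (A ! i) t"
      using lh by (simp add: herm_ip_append)
    moreover have "herm_ip (unitv ?k i) h = cj (h ! i)" using herm_ip_unitv[of i h] lh i by simp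
    moreover have "herm_ip (A ! i) t = (\<Sum>l<?k. A!i!l * cj (t ! l))"
      using lt \<open>length (A ! i) = ?k\<close> by (simp add: herm_ip_sum)
    ultimately have "cj (h ! i) + (\<Sum>l<?k. A!i!l * cj (t ! l)) = 0" by simp
    then have "cj (h ! i) = (\<Sum>l<?k. A!i!l * cj (t ! l))" by (simp add: add_eq0_iff)
    then have "cj (cj (h ! i)) = cj (\<Sum>l<?k. A!i!l * cj (t ! l))" by simp
    then show ?thesis by (simp add: cj_sum cj_mult)
  qed
  have "t = linr ?k A h"
  proof (rule list_eq_nth)
    show "length t = length (linr ?k A h)" using lt r by simp
    fix j assume j: "j < length t"
    have "linr ?k A h ! j = (\<Sum>i<?k. h ! i * A!i!j)" using r lh j lt by (simp add: nth_linr)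
    also have "\<dots> = (\<Sum>i<?k. (\<Sum>l<?k. t ! l * cj (A!i!l)) * A!i!j)"
      by (rule sum.cong[OF refl]) (simp add: hi mult.commute)
    also have "\<dots> = (\<Sum>l<?k. t ! l * (\<Sum>i<?k. cj (A!i!l) * A!i!j))"
      by (rule sum_swap_mat)
    also have "\<dots> = (\<Sum>l<?k. t ! l * (if l = j then 1 else 0))"
      using assms(2) j lt by (simp add: orthC_def)
    also have "\<dots> = t ! j" using j lt by (simp add: sum_delta)
    finally show "t ! j = linr ?k A h ! j" by simp
  qed
  then show "y \<in> code A" using yht lh unfolding code_def V_def by auto
qed

lemma code_sub_dual: assumes "sq A" "orthR A"
  shows "code A \<subseteq> herm_dual (2 * length A) (code A)"
  using code_self_orth[OF assms] code_len[OF _ assms(1)]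
  by (auto simp: herm_dual_def F0z)

lemma self_dual_code: assumes "sq A" "orthR A" "orthC A"
  shows "herm_self_dual (2 * length A) (code A)"
  unfolding herm_self_dual_def
  using quaternary_code_code[OF assms(1)] dual_sub_code[OF assms(1,3)] code_sub_dual[OF assms(1,2)]
  by blast

definition conjT :: "F4 list list \<Rightarrow> F4 list list" where
  "conjT A = map (\<lambda>j. map (\<lambda>r. cj (r ! j)) A) [0..<length A]"

lemma conjT_len[simp]: "length (conjT A) = length A" by (simp add: conjT_def)
lemma conjT_nth: "j < length A \<Longrightarrow> i < length A \<Longrightarrow> conjT A ! j ! i = cj (A ! i ! j)"
  by (simp add: conjT_def)
lemma sq_conjT: "sq (conjT A)" by (simp add: sq_def rowsl_def conjT_def)

lemma linr_AB: assumes "sq A" "orthC A" "length t = length A"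
  shows "linr (length A) A (linr (length A) (conjT A) t) = t"
proof -
  let ?k = "length A"
  have r: "rowsl ?k A" using assms by (simp add: sq_def)
  have rB: "rowsl ?k (conjT A)" using sq_conjT by (simp add: sq_def)
  show ?thesis
  proof (rule list_eq_nth)
    show "length (linr ?k A (linr ?k (conjT A) t)) = length t" using r assms by simp
    fix j assume j: "j < length (linr ?k A (linr ?k (conjT A) t))"
    then have j': "j < ?k" using r by simp
    have "linr ?k A (linr ?k (conjT A) t) ! j = (\<Sum>i<?k. (linr ?k (conjT A) t) ! i * A!i!j)"
      using r rB j' assms by (simp add: nth_linr)
    also have "\<dots> = (\<Sum>i<?k. (\<Sum>l<?k. t ! l * cj (A!i!l)) * A!i!j)"
      using rB assms by (intro sum.cong refl) (simp add: nth_linr conjT_nth)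
    also have "\<dots> = (\<Sum>l<?k. t ! l * (\<Sum>i<?k. cj (A!i!l) * A!i!j))" by (rule sum_swap_mat)
    also have "\<dots> = (\<Sum>l<?k. t ! l * (if l = j then 1 else 0))"
      using assms(2) j' by (simp add: orthC_def)
    also have "\<dots> = t ! j" using j' by (simp add: sum_delta)
    finally show "linr ?k A (linr ?k (conjT A) t) ! j = t ! j" .
  qed
qed

lemma linr_BA: assumes "sq A" "orthR A" "length m = length A"
  shows "linr (length A) (conjT A) (linr (length A) A m) = m"
proof -
  let ?k = "length A"
  have r: "rowsl ?k A" using assms by (simp add: sq_def)
  have rB: "rowsl ?k (conjT A)" using sq_conjT by (simp add: sq_def)
  show ?thesis
  proof (rule list_eq_nth)
    show "length (linr ?k (conjT A) (linr ?k A m)) = length m" using rB assms by simp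
    fix j assume j: "j < length (linr ?k (conjT A) (linr ?k A m))"
    then have j': "j < ?k" using rB by simp
    have "linr ?k (conjT A) (linr ?k A m) ! j = (\<Sum>i<?k. (linr ?k A m) ! i * conjT A ! i ! j)"
      using r rB j' assms by (simp add: nth_linr)
    also have "\<dots> = (\<Sum>i<?k. (\<Sum>l<?k. m ! l * A!l!i) * cj (A!j!i))"
      using r assms j' by (intro sum.cong refl) (simp add: nth_linr conjT_nth)
    also have "\<dots> = (\<Sum>l<?k. m ! l * (\<Sum>i<?k. A!l!i * cj (A!j!i)))" by (rule sum_swap_mat)
    also have "\<dots> = (\<Sum>l<?k. m ! l * (if l = j then 1 else 0))"
      using assms(2) j' by (simp add: orthR_def)
    also have "\<dots> = m ! j" using j' by (simp add: sum_delta)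
    finally show "linr ?k (conjT A) (linr ?k A m) ! j = m ! j" .
  qed
qed

definition chi :: "F4 \<Rightarrow> int" where "chi a = (if a = F0 \<or> a = F1 then 1 else -1)"

lemma chi_add: "chi (a + b) = chi a * chi b"
  by (cases a; cases b) (simp_all add: chi_def plus_F4_def zero_F4_def one_F4_def del: f4_add_eq)
lemma chi_0[simp]: "chi 0 = 1" by (simp add: chi_def zero_F4_def)
lemma chi_Fw[simp]: "chi Fw = -1" by (simp add: chi_def)

lemma vadd_cancel: "length c = length d \<Longrightarrow> vadd (vadd c d) d = c"
  by (intro list_eq_nth) (simp_all add: add.assoc)

lemma herm_ip_len0: "length c \<noteq> length v \<Longrightarrow> True" by simp

lemma char_sum_nonorth:
  assumes D: "quaternary_code n D" and lv: "length v = n" and c0: "c0 \<in> D" and b: "herm_ip c0 v \<noteq> 0"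
  shows "(\<Sum>c\<in>D. chi (herm_ip c v)) = 0"
proof -
  have DV: "\<And>c. c \<in> D \<Longrightarrow> length c = n" using D by (auto simp: quaternary_code_def)
  define c1 where "c1 = smul (Fw * inverse (herm_ip c0 v)) c0"
  have c1D: "c1 \<in> D" using D c0 by (simp add: quaternary_code_def c1_def)
  have lc1: "length c1 = n" using DV[OF c0] by (simp add: c1_def)
  have ip1: "herm_ip c1 v = Fw"
    using b DV[OF c0] lv by (simp add: c1_def herm_ip_smul1)
  have "(\<Sum>c\<in>D. chi (herm_ip c v)) = (\<Sum>c\<in>D. chi (herm_ip (vadd c c1) v))"
    apply (rule sum.reindex_bij_witness[where i="\<lambda>c. vadd c c1" and j="\<lambda>c. vadd c c1"])
    using DV lc1 D c1D by (auto simp: vadd_cancel quaternary_code_def)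
  also have "\<dots> = (\<Sum>c\<in>D. - chi (herm_ip c v))"
    using DV lc1 lv by (intro sum.cong refl) (simp add: herm_ip_vadd1 chi_add ip1)
  finally have "(\<Sum>c\<in>D. chi (herm_ip c v)) = - (\<Sum>c\<in>D. chi (herm_ip c v))"
    by (simp add: sum_negf)
  then show ?thesis by simp
qed

lemma chi_sum_F4: "(\<Sum>b\<in>UNIV. chi (a * cj b) * t ^ (if b = 0 then 0 else 1)) = (if a = 0 then 1 + 3 * t else 1 - (t::int))"
  by (cases a) (simp_all add: sum_F4 chi_def cj_def times_F4_def zero_F4_def del: f4_mul_eq)

lemma sum_V_chi: "(\<Sum>v\<in>V (length c). chi (herm_ip c v) * t ^ wt v)
     = (1 + 3 * t) ^ (length c - wt c) * (1 - (t::int)) ^ wt c"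
proof (induction c)
  case Nil then show ?case by (simp add: V_0)
next
  case (Cons a c)
  have "(\<Sum>v\<in>V (length (a # c)). chi (herm_ip (a # c) v) * t ^ wt v)
      = (\<Sum>b\<in>UNIV. \<Sum>v\<in>V (length c). chi (a * cj b) * t ^ (if b = 0 then 0 else 1) * (chi (herm_ip c v) * t ^ wt v))"
    by (simp add: sum_V_Suc chi_add) (intro sum.cong refl, simp add: algebra_simps)
  also have "\<dots> = (\<Sum>b\<in>UNIV. chi (a * cj b) * t ^ (if b = 0 then 0 else 1)) * (\<Sum>v\<in>V (length c). chi (herm_ip c v) * t ^ wt v)"
    by (simp add: sum_product)
  also have "\<dots> = (if a = 0 then 1 + 3 * t else 1 - t) * ((1 + 3 * t) ^ (length c - wt c) * (1 - t) ^ wt c)"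
    by (simp add: chi_sum_F4 Cons.IH)
  also have "\<dots> = (1 + 3 * t) ^ (length (a # c) - wt (a # c)) * (1 - t) ^ wt (a # c)"
    using wt_le[of c] by (simp add: Suc_diff_le)
  finally show ?case .
qed

lemma macwilliams:
  assumes D: "quaternary_code n D"
  shows "int (card D) * (\<Sum>v\<in>herm_dual n D. t ^ wt v) = (\<Sum>c\<in>D. (1 + 3 * t) ^ (n - wt c) * (1 - (t::int)) ^ wt c)"
proof -
  have DV: "D \<subseteq> V n" using D by (auto simp: quaternary_code_def V_def)
  then have fD: "finite D" using finite_subset finite_V by blast
  have dV: "herm_dual n D \<subseteq> V n" by (auto simp: herm_dual_def V_def)
  have "(\<Sum>c\<in>D. (1 + 3 * t) ^ (n - wt c) * (1 - t) ^ wt c)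
      = (\<Sum>c\<in>D. \<Sum>v\<in>V n. chi (herm_ip c v) * t ^ wt v)"
    using DV by (intro sum.cong refl) (auto simp: V_def sum_V_chi[symmetric])
  also have "\<dots> = (\<Sum>v\<in>V n. t ^ wt v * (\<Sum>c\<in>D. chi (herm_ip c v)))"
    by (subst sum.swap) (simp add: sum_distrib_left mult.commute)
  also have "\<dots> = (\<Sum>v\<in>V n. if v \<in> herm_dual n D then int (card D) * t ^ wt v else 0)"
  proof (intro sum.cong refl)
    fix v assume v: "v \<in> V n"
    show "t ^ wt v * (\<Sum>c\<in>D. chi (herm_ip c v)) = (if v \<in> herm_dual n D then int (card D) * t ^ wt v else 0)"
    proof (cases "v \<in> herm_dual n D")
      case True
      then have "\<And>c. c \<in> D \<Longrightarrow> herm_ip c v = 0" by (simp add: herm_dual_def F0z)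
      then show ?thesis using True by simp
    next
      case False
      then obtain c0 where "c0 \<in> D" "herm_ip c0 v \<noteq> 0" using v by (auto simp: herm_dual_def V_def F0z)
      then show ?thesis using False char_sum_nonorth[OF D _ \<open>c0 \<in> D\<close>] v by (simp add: V_def)
    qed
  qed
  also have "\<dots> = (\<Sum>v\<in>{v \<in> V n. v \<in> herm_dual n D}. int (card D) * t ^ wt v)"
    by (simp add: sum.inter_filter)
  also have "{v \<in> V n. v \<in> herm_dual n D} = herm_dual n D" using dV by blast
  finally show ?thesis by (simp add: sum_distrib_left)
qed

lemma even_wt: assumes "herm_self_dual n D" "c \<in> D" shows "even (wt c)"
proof -
  have "c \<in> herm_dual n D" using assms by (simp add: herm_self_dual_def)
  then have "herm_ip c c = 0" using assms(2) by (simp add: herm_dual_def F0z)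
  then show ?thesis using herm_ip_self[of c] by (simp split: if_splits)
qed

lemma sum_group_wt:
  assumes "finite D" "\<And>c. c \<in> D \<Longrightarrow> wt c \<le> n"
  shows "(\<Sum>c\<in>D. g (wt c)) = (\<Sum>i\<le>n. of_nat (card {c\<in>D. wt c = i}) * (g i :: 'a::comm_ring_1))"
proof -
  have "(\<Sum>c\<in>D. g (wt c)) = (\<Sum>i\<le>n. \<Sum>c\<in>{c\<in>D. wt c = i}. g (wt c))"
    using assms by (intro sum.group[symmetric]) auto
  also have "\<dots> = (\<Sum>i\<le>n. of_nat (card {c\<in>D. wt c = i}) * g i)"
    by (intro sum.cong refl) simp
  finally show ?thesis .
qed

lemma zero_word_Suc: "zero_word (Suc k) = 0 # zero_word k" by (simp add: zero_word_def F0z)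

lemma vadd_zero_r: "length x = n \<Longrightarrow> vadd x (zero_word n) = x"
  by (intro list_eq_nth) simp_all
lemma vadd_zero_l: "length x = n \<Longrightarrow> vadd (zero_word n) x = x"
  by (intro list_eq_nth) simp_all
lemma vadd_assoc: "length x = length y \<Longrightarrow> length y = length z \<Longrightarrow> vadd x (vadd y z) = vadd (vadd x y) z"
  by (intro list_eq_nth) (simp_all add: add.assoc)
lemma smul_0: "smul 0 r = zero_word (length r)"
  by (intro list_eq_nth) simp_all
lemma smul_1: "smul 1 r = r"
  by (intro list_eq_nth) simp_all
lemma wt_smul_0: "c \<noteq> 0 \<Longrightarrow> wt (smul c x) = wt x" by (rule wt_smul)

definition cval :: "nat \<Rightarrow> F4 list \<Rightarrow> nat \<Rightarrow> nat" where
  "cval th s hw = (if th \<le> wt s then (if hw + wt s \<le> 7 then 100000 else if hw + wt s = 8 then 1 else 0) else 0)"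

fun go :: "nat \<Rightarrow> F4 list list \<Rightarrow> nat \<Rightarrow> F4 list \<Rightarrow> nat \<Rightarrow> nat" where
  "go th [] b s hw = 0"
| "go th (r#rs) 0 s hw = 0"
| "go th (r#rs) (Suc b) s hw = go th rs (Suc b) s hw
     + (cval th (vadd s r) (Suc hw) + go th rs b (vadd s r) (Suc hw))
     + (cval th (vadd s (smul Fw r)) (Suc hw) + go th rs b (vadd s (smul Fw r)) (Suc hw))
     + (cval th (vadd s (smul Fw2 r)) (Suc hw) + go th rs b (vadd s (smul Fw2 r)) (Suc hw))"

definition GO :: "nat \<Rightarrow> nat \<Rightarrow> F4 list list \<Rightarrow> nat \<Rightarrow> F4 list \<Rightarrow> nat \<Rightarrow> nat" where
  "GO th n rs b s hw = (\<Sum>\<mu>\<in>V (length rs). if \<mu> \<noteq> zero_word (length rs) \<and> wt \<mu> \<le> b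
      then cval th (vadd s (linr n rs \<mu>)) (hw + wt \<mu>) else 0)"

lemma zero_in_V[simp]: "zero_word k \<in> V k" by (simp add: V_def)

lemma wt_zero_word[simp]: "wt (zero_word k) = 0" by (simp add: zero_word_def wt_def)
lemma nz_consts[simp]: "F1 \<noteq> 0" "Fw \<noteq> 0" "Fw2 \<noteq> 0" by (simp_all add: zero_F4_def)

lemma split0: "(\<Sum>\<mu>\<in>V k. if wt \<mu> \<le> b then f \<mu> else 0)
   = f (zero_word k) + (\<Sum>\<mu>\<in>V k. if \<mu> \<noteq> zero_word k \<and> wt \<mu> \<le> b then f \<mu> else (0::nat))"
proof -
  have w0: "wt (zero_word k) = 0" by (simp add: zero_word_def wt_def)
  have "(\<Sum>\<mu>\<in>V k. if wt \<mu> \<le> b then f \<mu> else 0)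
     = (if wt (zero_word k) \<le> b then f (zero_word k) else 0) + (\<Sum>\<mu>\<in>V k - {zero_word k}. if wt \<mu> \<le> b then f \<mu> else 0)"
    by (rule sum.remove) simp_all
  moreover have "(\<Sum>\<mu>\<in>V k. if \<mu> \<noteq> zero_word k \<and> wt \<mu> \<le> b then f \<mu> else (0::nat))
     = (if zero_word k \<noteq> zero_word k \<and> wt (zero_word k) \<le> b then f (zero_word k) else 0) + (\<Sum>\<mu>\<in>V k - {zero_word k}. if \<mu> \<noteq> zero_word k \<and> wt \<mu> \<le> b then f \<mu> else 0)"
    by (rule sum.remove) simp_all
  moreover have "(\<Sum>\<mu>\<in>V k - {zero_word k}. if \<mu> \<noteq> zero_word k \<and> wt \<mu> \<le> b then f \<mu> else 0)
     = (\<Sum>\<mu>\<in>V k - {zero_word k}. if wt \<mu> \<le> b then f \<mu> else 0)"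
    by (intro sum.cong refl) auto
  ultimately show ?thesis by simp
qed

lemma GO_step_nz:
  assumes "rowsl n (r # rs)" "length s = n" "a \<noteq> 0"
  shows "(\<Sum>\<mu>\<in>V (length rs). if a # \<mu> \<noteq> zero_word (Suc (length rs)) \<and> wt (a # \<mu>) \<le> Suc b
      then cval th (vadd s (linr n (r # rs) (a # \<mu>))) (hw + wt (a # \<mu>)) else 0)
    = cval th (vadd s (smul a r)) (Suc hw) + GO th n rs b (vadd s (smul a r)) (Suc hw)"
proof -
  have lr: "length r = n" "rowsl n rs" using assms by auto
  have "(\<Sum>\<mu>\<in>V (length rs). if a # \<mu> \<noteq> zero_word (Suc (length rs)) \<and> wt (a # \<mu>) \<le> Suc b
      then cval th (vadd s (linr n (r # rs) (a # \<mu>))) (hw + wt (a # \<mu>)) else 0)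
    = (\<Sum>\<mu>\<in>V (length rs). if wt \<mu> \<le> b then cval th (vadd (vadd s (smul a r)) (linr n rs \<mu>)) (Suc hw + wt \<mu>) else 0)"
    using assms lr by (intro sum.cong refl) (auto simp: zero_word_Suc vadd_assoc)
  also have "\<dots> = cval th (vadd (vadd s (smul a r)) (linr n rs (zero_word (length rs)))) (Suc hw + wt (zero_word (length rs)))
     + GO th n rs b (vadd s (smul a r)) (Suc hw)"
    unfolding GO_def by (rule split0)
  also have "\<dots> = cval th (vadd s (smul a r)) (Suc hw) + GO th n rs b (vadd s (smul a r)) (Suc hw)"
    using lr assms by (simp add: linr_zero vadd_zero_r)
  finally show ?thesis .
qed

lemma go_GO: "rowsl n rs \<Longrightarrow> length s = n \<Longrightarrow> go th rs b s hw = GO th n rs b s hw"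
proof (induction rs arbitrary: b s hw)
  case Nil then show ?case by (simp add: GO_def V_0 zero_word_def)
next
  case (Cons r rs)
  have lr: "length r = n" "rowsl n rs" using Cons by auto
  show ?case
  proof (cases b)
    case 0
    have "GO th n (r # rs) b s hw = 0" unfolding GO_def
      using 0 by (intro sum.neutral) (auto simp: wt_eq0 V_def zero_word_def F0z)
    then show ?thesis using 0 by simp
  next
    case (Suc b')
    let ?T = "\<lambda>a. (\<Sum>\<mu>\<in>V (length rs). if a # \<mu> \<noteq> zero_word (Suc (length rs)) \<and> wt (a # \<mu>) \<le> Suc b'
      then cval th (vadd s (linr n (r # rs) (a # \<mu>))) (hw + wt (a # \<mu>)) else 0)"
    have "GO th n (r # rs) b s hw = ?T F0 + ?T F1 + ?T Fw + ?T Fw2"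
      unfolding GO_def Suc by (simp only: length_Cons sum_V_Suc sum_F4)
    moreover have "?T F0 = GO th n rs (Suc b') s hw"
      unfolding GO_def using lr Cons.prems
      by (intro sum.cong refl) (auto simp: F0z zero_word_Suc smul_0 vadd_zero_l)
    moreover have "?T F1 = cval th (vadd s r) (Suc hw) + GO th n rs b' (vadd s r) (Suc hw)"
      using GO_step_nz[OF Cons.prems, where a=F1] by (simp add: F1o smul_1 F0z)
    moreover have "?T Fw = cval th (vadd s (smul Fw r)) (Suc hw) + GO th n rs b' (vadd s (smul Fw r)) (Suc hw)"
      using GO_step_nz[OF Cons.prems, where a=Fw] by (simp add: F0z)
    moreover have "?T Fw2 = cval th (vadd s (smul Fw2 r)) (Suc hw) + GO th n rs b' (vadd s (smul Fw2 r)) (Suc hw)"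
      using GO_step_nz[OF Cons.prems, where a=Fw2] by (simp add: F0z)
    ultimately show ?thesis using Suc Cons.IH lr Cons.prems by simp
  qed
qed

definition F8 :: "F4 list \<Rightarrow> nat" where
  "F8 c = (if c \<noteq> zero_word (length c) \<and> wt c \<le> 7 then 100000 else if wt c = 8 then 1 else 0)"

lemma sum_code: "(\<Sum>c\<in>code A. f c) = (\<Sum>m\<in>V (length A). f (m @ linr (length A) A m))"
  unfolding code_def by (simp add: sum.reindex[OF inj_enc])

lemma append_zero_iff: "length m = k \<Longrightarrow> (m @ x = zero_word (k + length x)) \<longleftrightarrow> m = zero_word k \<and> x = zero_word (length x)"
  by (auto simp: zero_word_def replicate_add)

lemma tot:
  assumes sqA: "sq A" and R: "orthR A" and C: "orthC A"
  shows "(\<Sum>c\<in>code A. F8 c) = go 0 A 4 (zero_word (length A)) 0 + go 5 (conjT A) 3 (zero_word (length A)) 0"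
proof -
  let ?k = "length A"
  let ?B = "conjT A"
  have r: "rowsl ?k A" using sqA by (simp add: sq_def)
  have rB: "rowsl ?k ?B" using sq_conjT by (simp add: sq_def)
  let ?f = "\<lambda>m. F8 (m @ linr ?k A m)"
  have "(\<Sum>c\<in>code A. F8 c) = (\<Sum>m\<in>V ?k. ?f m)" by (rule sum_code)
  also have "\<dots> = (\<Sum>m\<in>V ?k. if wt m \<le> 4 then ?f m else 0) + (\<Sum>m\<in>V ?k. if wt m \<le> 4 then 0 else ?f m)"
    by (subst sum.distrib[symmetric]) (intro sum.cong refl, simp)
  also have "(\<Sum>m\<in>V ?k. if wt m \<le> 4 then ?f m else 0) = GO 0 ?k A 4 (zero_word ?k) 0"
    unfolding GO_def
  proof (intro sum.cong refl)
    fix m assume m: "m \<in> V ?k"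
    then have lm: "length m = ?k" by (simp add: V_def)
    have ll: "length (linr ?k A m) = ?k" using r by simp
    show "(if wt m \<le> 4 then ?f m else 0) = (if m \<noteq> zero_word ?k \<and> wt m \<le> 4
        then cval 0 (vadd (zero_word ?k) (linr ?k A m)) (0 + wt m) else 0)"
    proof (cases "m = zero_word ?k")
      case True
      have l0: "linr ?k A m = zero_word ?k" using True linr_zero[OF r] by simp
      have "m @ linr ?k A m = zero_word (length (m @ linr ?k A m))"
        using True l0 by (simp add: zero_word_def replicate_add[symmetric])
      then have "F8 (m @ linr ?k A m) = 0" unfolding F8_def by (metis wt_zero_word zero_neq_numeral)
      then show ?thesis using True by simp
    next
      case False
      then have "m @ linr ?k A m \<noteq> zero_word (length (m @ linr ?k A m))"
        using append_zero_iff[OF lm, of "linr ?k A m"] lm by simp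
      then show ?thesis using False ll by (simp add: vadd_zero_l F8_def cval_def)
    qed
  qed
  also have "(\<Sum>m\<in>V ?k. if wt m \<le> 4 then 0 else ?f m)
      = (\<Sum>t\<in>V ?k. if wt (linr ?k ?B t) \<le> 4 then 0 else ?f (linr ?k ?B t))"
  proof (rule sum.reindex_bij_witness[where i="linr ?k ?B" and j="linr ?k A"])
    fix a assume "a \<in> V ?k"
    then have la: "length a = ?k" by (simp add: V_def)
    show "linr ?k ?B (linr ?k A a) = a" using linr_BA[OF sqA R la] .
    show "linr ?k A a \<in> V ?k" using r by (simp add: V_def)
    show "(if wt (linr ?k ?B (linr ?k A a)) \<le> 4 then 0 else ?f (linr ?k ?B (linr ?k A a)))
       = (if wt a \<le> 4 then 0 else ?f a)" using linr_BA[OF sqA R la] by simp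
  next
    fix b assume "b \<in> V ?k"
    then have lb: "length b = ?k" by (simp add: V_def)
    show "linr ?k A (linr ?k ?B b) = b" using linr_AB[OF sqA C lb] .
    show "linr ?k ?B b \<in> V ?k" using rB by (simp add: V_def)
  qed
  also have "\<dots> = GO 5 ?k ?B 3 (zero_word ?k) 0"
    unfolding GO_def conjT_len
  proof (intro sum.cong refl)
    fix t assume t: "t \<in> V ?k"
    then have lt: "length t = ?k" by (simp add: V_def)
    let ?m = "linr ?k ?B t"
    have lm: "length ?m = ?k" using rB by simp
    have mt: "linr ?k A ?m = t" using linr_AB[OF sqA C lt] .
    show "(if wt ?m \<le> 4 then 0 else ?f ?m) = (if t \<noteq> zero_word ?k \<and> wt t \<le> 3
        then cval 5 (vadd (zero_word ?k) ?m) (0 + wt t) else 0)"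
    proof (cases "t = zero_word ?k")
      case True
      then have "?m = zero_word ?k" using rB linr_zero[OF rB] by simp
      then show ?thesis using True by simp
    next
      case False
      then have nz: "?m @ t \<noteq> zero_word (length (?m @ t))"
        using append_zero_iff[OF lm, of t] lm lt by simp
      show ?thesis using False nz lm mt by (simp add: vadd_zero_l F8_def cval_def)
    qed
  qed
  finally show ?thesis using go_GO[OF r, of "zero_word ?k"] go_GO[OF rB, of "zero_word ?k"]
    by simp
qed

lemma sum_F8: assumes "finite D"
  shows "(\<Sum>c\<in>D. F8 c) = 100000 * card {c\<in>D. c \<noteq> zero_word (length c) \<and> wt c \<le> 7} + card {c\<in>D. wt c = 8}"
proof -
  have "(\<Sum>c\<in>D. F8 c) = (\<Sum>c\<in>D. (if c \<noteq> zero_word (length c) \<and> wt c \<le> 7 then 100000 else 0) + (if wt c = 8 then 1 else 0))"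
    by (intro sum.cong refl) (auto simp: F8_def)
  also have "\<dots> = 100000 * card {c\<in>D. c \<noteq> zero_word (length c) \<and> wt c \<le> 7} + card {c\<in>D. wt c = 8}"
    using assms by (simp add: sum.distrib sum.inter_filter[symmetric])
  finally show ?thesis .
qed

lemma sum24: "(\<Sum>i\<le>24. f i) = f 0 + f 1 + f 2 + f 3 + f 4 + f 5 + f 6 + f 7 + f 8 + f 9 + f 10 + f 11 + f 12
   + f 13 + f 14 + f 15 + f 16 + f 17 + f 18 + f 19 + f 20 + f 21 + f 22 + f 23 + f (24::nat)"
  by (simp add: numeral_eq_Suc atMost_Suc add.commute add.left_commute)

lemma solve:
  fixes N :: "nat \<Rightarrow> int" and \<alpha> :: int
  assumes odd: "\<And>i. odd i \<Longrightarrow> N i = 0" and "N 0 = 1" "N 2 = 0" "N 4 = 0" "N 6 = 0" "N 8 = \<alpha>"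
  and MW: "\<And>t::int. 4^12 * (\<Sum>i\<le>24. N i * t^i) = (\<Sum>i\<le>24. N i * ((1+3*t)^(24-i) * (1-t)^i))"
  shows "N 10 = 18216 - 8*\<alpha> \<and> N 12 = 156492 + 28*\<alpha> \<and> N 14 = 1147608 - 56*\<alpha> \<and> N 16 = 3736557 + 70*\<alpha>
    \<and> N 18 = 6248088 - 56*\<alpha> \<and> N 20 = 4399164 + 28*\<alpha> \<and> N 22 = 1038312 - 8*\<alpha> \<and> N 24 = 32778 + \<alpha>"
proof -
  have o: "N 1 = 0" "N 3 = 0" "N 5 = 0" "N 7 = 0" "N 9 = 0" "N 11 = 0" "N 13 = 0" "N 15 = 0"
    "N 17 = 0" "N 19 = 0" "N 21 = 0" "N 23 = 0" by (simp_all add: odd)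
  have e: "\<And>t. 4^12 * (\<Sum>i\<le>24. N i * t^i) = (\<Sum>i\<le>24. N i * ((1+3*t)^(24-i) * (1-t)^i))" by (rule MW)
  note E = e[of 2] e[of 3] e[of 4] e[of 5] e[of 6] e[of 7] e[of 8] e[of 9]
  note E' = E[unfolded sum24 o assms(2-6), simplified]
  have "N 10 = 18216 - 8*\<alpha>" using E' by algebra
  moreover have "N 12 = 156492 + 28*\<alpha>" using E' by algebra
  moreover have "N 14 = 1147608 - 56*\<alpha>" using E' by algebra
  moreover have "N 16 = 3736557 + 70*\<alpha>" using E' by algebra
  moreover have "N 18 = 6248088 - 56*\<alpha>" using E' by algebra
  moreover have "N 20 = 4399164 + 28*\<alpha>" using E' by algebra
  moreover have "N 22 = 1038312 - 8*\<alpha>" using E' by algebra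
  moreover have "N 24 = 32778 + \<alpha>" using E' by algebra
  ultimately show ?thesis by blast
qed


definition target :: "int \<Rightarrow> int poly" where
  "target \<alpha> = monom 1 0 + monom \<alpha> 8 + monom (18216 - 8*\<alpha>) 10 + monom (156492 + 28*\<alpha>) 12
      + monom (1147608 - 56*\<alpha>) 14 + monom (3736557 + 70*\<alpha>) 16 + monom (6248088 - 56*\<alpha>) 18
      + monom (4399164 + 28*\<alpha>) 20 + monom (1038312 - 8*\<alpha>) 22 + monom (32778 + \<alpha>) 24"

lemma of_nat_monom: "(of_nat n :: int poly) * monom 1 i = monom (int n) i"
  by (induction n) (simp_all add: algebra_simps add_monom)

theorem main:
  assumes len: "length A = 12" and sqA: "sq A" and R: "orthR A" and C: "orthC A"
    and cnt: "go 0 A 4 (zero_word 12) 0 + go 5 (conjT A) 3 (zero_word 12) 0 = a"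
    and a0: "0 < a" and a1: "a < 100000"
  shows "near_extremal_24 (code A) \<and> weight_enumerator (code A) = target (int a)"
proof -
  let ?D = "code A"
  have SD: "herm_self_dual 24 ?D" using self_dual_code[OF sqA R C] len by simp
  then have Q: "quaternary_code 24 ?D" and DD: "herm_dual 24 ?D = ?D"
    by (simp_all add: herm_self_dual_def)
  have fD: "finite ?D" by simp
  have lenD: "\<And>c. c \<in> ?D \<Longrightarrow> length c = 24" using code_len[OF _ sqA] len by simp
  have wtle: "\<And>c. c \<in> ?D \<Longrightarrow> wt c \<le> 24" using lenD wt_le by metis
  have z: "zero_word 24 \<in> ?D" using Q by (simp add: quaternary_code_def)
  define L where "L = {c\<in>?D. c \<noteq> zero_word (length c) \<and> wt c \<le> 7}"
  define N where "N i = int (card {c\<in>?D. wt c = i})" for i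
  have "100000 * card L + card {c\<in>?D. wt c = 8} = a"
    using tot[OF sqA R C] sum_F8[OF fD] cnt len by (simp add: L_def)
  then have L0: "card L = 0" using a1 by linarith
  have N8': "card {c\<in>?D. wt c = 8} = a" using L0 \<open>100000 * card L + card {c\<in>?D. wt c = 8} = a\<close> by simp
  have Le: "L = {}" using L0 fD by (simp add: L_def)
  have low: "\<And>c. c \<in> ?D \<Longrightarrow> c \<noteq> zero_word 24 \<Longrightarrow> 8 \<le> wt c"
  proof (rule ccontr)
    fix c assume c: "c \<in> ?D" "c \<noteq> zero_word 24" "\<not> 8 \<le> wt c"
    then have "c \<in> L" using lenD[OF c(1)] by (simp add: L_def)
    then show False using Le by simp
  qed
  have w0: "\<And>c. c \<in> ?D \<Longrightarrow> wt c = 0 \<longleftrightarrow> c = zero_word 24"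
    using lenD by (auto simp: wt_eq0 zero_word_def F0z)
  have N0: "N 0 = 1"
  proof -
    have "{c\<in>?D. wt c = 0} = {zero_word 24}" using w0 z by auto
    then show ?thesis by (simp add: N_def)
  qed
  have Nlow: "N i = 0" if "0 < i" "i < 8" for i
  proof -
    have "{c\<in>?D. wt c = i} = {}" using low w0 that by fastforce
    then show ?thesis by (simp add: N_def)
  qed
  have Nodd: "N i = 0" if "odd i" for i
  proof -
    have "{c\<in>?D. wt c = i} = {}" using even_wt[OF SD] that by fastforce
    then show ?thesis by (simp add: N_def)
  qed
  have N8: "N 8 = int a" using N8' by (simp add: N_def)
  have cardD: "card ?D = 4 ^ 12" using card_code len by simp
  have MW: "4^12 * (\<Sum>i\<le>24. N i * t^i) = (\<Sum>i\<le>24. N i * ((1+3*t)^(24-i) * (1-t)^i))" for t :: int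
  proof -
    have "int (card ?D) * (\<Sum>v\<in>?D. t ^ wt v) = (\<Sum>c\<in>?D. (1 + 3 * t) ^ (24 - wt c) * (1 - t) ^ wt c)"
      using macwilliams[OF Q, of t] DD by simp
    moreover have "(\<Sum>c\<in>?D. (1 + 3 * t) ^ (24 - wt c) * (1 - t) ^ wt c) = (\<Sum>i\<le>24. N i * ((1+3*t)^(24-i) * (1-t)^i))"
      unfolding N_def by (rule sum_group_wt[OF fD wtle, where g="\<lambda>i. (1+3*t)^(24-i) * (1-t)^i"])
    moreover have "(\<Sum>c\<in>?D. t ^ wt c) = (\<Sum>i\<le>24. N i * t^i)"
      unfolding N_def by (rule sum_group_wt[OF fD wtle, where g="\<lambda>i. t^i"])
    ultimately show ?thesis using cardD by simp
  qed
  have sol: "N 10 = 18216 - 8*int a \<and> N 12 = 156492 + 28*int a \<and> N 14 = 1147608 - 56*int a \<and> N 16 = 3736557 + 70*int a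
    \<and> N 18 = 6248088 - 56*int a \<and> N 20 = 4399164 + 28*int a \<and> N 22 = 1038312 - 8*int a \<and> N 24 = 32778 + int a"
    by (rule solve[OF Nodd N0 Nlow Nlow Nlow N8 MW]) simp_all
  have WE: "weight_enumerator ?D = (\<Sum>i\<le>24. monom (N i) i)"
    unfolding weight_enumerator_def
    by (simp add: sum_group_wt[OF fD wtle, where 'a="int poly"] N_def of_nat_monom)
  have "weight_enumerator ?D = target (int a)"
    unfolding WE sum24 target_def using sol N0 N8 Nodd[of 1] Nodd[of 3] Nodd[of 5] Nodd[of 7] Nodd[of 9]
      Nodd[of 11] Nodd[of 13] Nodd[of 15] Nodd[of 17] Nodd[of 19] Nodd[of 21] Nodd[of 23]
      Nlow[of 2] Nlow[of 4] Nlow[of 6]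
    by simp
  moreover have "min_weight 24 ?D = 8"
  proof -
    have ne: "{c\<in>?D. wt c = 8} \<noteq> {}" using N8' a0 by (metis card.empty less_irrefl)
    then obtain c where c: "c \<in> ?D" "wt c = 8" by auto
    then have "c \<noteq> zero_word 24" using w0 by fastforce
    then have "8 \<in> wt ` (?D - {zero_word 24})" using c by force
    moreover have "\<forall>y\<in>wt ` (?D - {zero_word 24}). 8 \<le> y" using low by auto
    ultimately show ?thesis unfolding min_weight_def
      by (intro Min_eqI) auto
  qed
  ultimately show ?thesis using SD by (simp add: near_extremal_24_def)
qed

definition transp :: "F4 list list \<Rightarrow> F4 list list" where
  "transp A = map (\<lambda>j. map (\<lambda>r. r ! j) A) [0..<length A]"

definition orth_chk :: "F4 list list \<Rightarrow> bool" where
  "orth_chk M = list_all (\<lambda>i. list_all (\<lambda>l. herm_ip (M!i) (M!l) = (if i = l then F1 else F0)) [0..<length M]) [0..<length M]"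

lemma orthR_chk: assumes "sq A" "orth_chk A" shows "orthR A"
  unfolding orthR_def
proof (intro allI impI)
  fix i l assume il: "i < length A" "l < length A"
  have "herm_ip (A!i) (A!l) = (if i = l then 1 else 0)"
    using assms(2) il by (simp add: orth_chk_def list_all_iff F0z F1o)
  moreover have "length (A!i) = length A" "length (A!l) = length A"
    using assms(1) il by (simp_all add: sq_def rowsl_def)
  ultimately show "(\<Sum>j<length A. A!i!j * cj (A!l!j)) = (if i = l then 1 else 0)"
    by (simp add: herm_ip_sum)
qed

lemma orthC_chk: assumes "sq A" "orth_chk (transp A)" shows "orthC A"
  unfolding orthC_def
proof (intro allI impI)
  fix l j assume lj: "l < length A" "j < length A"
  have "herm_ip (transp A!j) (transp A!l) = (if j = l then 1 else 0)"
    using assms(2) lj by (simp add: orth_chk_def list_all_iff F0z F1o transp_def)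
  moreover have "herm_ip (transp A!j) (transp A!l) = (\<Sum>i<length A. A!i!j * cj (A!i!l))"
    using lj by (simp add: herm_ip_sum transp_def)
  ultimately show "(\<Sum>i<length A. cj (A!i!l) * A!i!j) = (if l = j then 1 else 0)"
    by (simp add: mult.commute eq_commute)
qed

lemma sq_chk: "length A = 12 \<Longrightarrow> list_all (\<lambda>r. length r = 12) A \<Longrightarrow> sq A"
  by (simp add: sq_def rowsl_def list_all_iff)

lemma inst:
  assumes "length A = 12" "list_all (\<lambda>r. length r = 12) A" "orth_chk A" "orth_chk (transp A)"
    "go 0 A 4 (zero_word 12) 0 + go 5 (conjT A) 3 (zero_word 12) 0 = a" "0 < a" "a < 100000"
  shows "\<exists>D. near_extremal_24 D \<and> weight_enumerator D = target (int a)"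
  using main[OF assms(1) sq_chk[OF assms(1,2)] orthR_chk[OF sq_chk[OF assms(1,2)] assms(3)]
      orthC_chk[OF sq_chk[OF assms(1,2)] assms(4)] assms(5-7)] by blast

lemma smul_vadd: "smul c (vadd x y) = vadd (smul c x) (smul c y)"
  by (intro list_eq_nth) (simp_all add: algebra_simps)
lemma smul_smul: "smul a (smul b x) = smul (a * b) x"
  by (intro list_eq_nth) (simp_all add: algebra_simps)
lemma smul_eq_zero_iff: "c \<noteq> 0 \<Longrightarrow> length x = k \<Longrightarrow> smul c x = zero_word k \<longleftrightarrow> x = zero_word k"
  by (auto simp: list_eq_iff_nth_eq)
lemma cval_smul: "c \<noteq> 0 \<Longrightarrow> cval th (smul c x) hw = cval th x hw"
  by (simp add: cval_def wt_smul)

lemma GO_smul: assumes r: "rowsl n rs" and ls: "length s = n" and c: "c \<noteq> 0"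
  shows "GO th n rs b (smul c s) hw = GO th n rs b s hw"
  unfolding GO_def
proof (rule sym, rule sum.reindex_bij_witness[where j="smul c" and i="smul (inverse c)"])
  fix a assume a: "a \<in> V (length rs)"
  show "smul (inverse c) (smul c a) = a" using c by (simp add: smul_smul smul_1)
  show "smul c a \<in> V (length rs)" using a by (simp add: V_def)
  have la: "length a = length rs" using a by (simp add: V_def)
  have "vadd (smul c s) (linr n rs (smul c a)) = smul c (vadd s (linr n rs a))"
    using r la by (simp add: linr_smul smul_vadd)
  then show "(if smul c a \<noteq> zero_word (length rs) \<and> wt (smul c a) \<le> b
      then cval th (vadd (smul c s) (linr n rs (smul c a))) (hw + wt (smul c a)) else 0) =
    (if a \<noteq> zero_word (length rs) \<and> wt a \<le> b then cval th (vadd s (linr n rs a)) (hw + wt a) else 0)"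
    using c la by (simp add: smul_eq_zero_iff wt_smul cval_smul)
next
  fix b assume b: "b \<in> V (length rs)"
  show "smul c (smul (inverse c) b) = b" using c by (simp add: smul_smul smul_1)
  show "smul (inverse c) b \<in> V (length rs)" using b by (simp add: V_def)
qed

lemma go_smul: "rowsl n rs \<Longrightarrow> length s = n \<Longrightarrow> c \<noteq> 0 \<Longrightarrow> go th rs b (smul c s) hw = go th rs b s hw"
  by (simp add: go_GO GO_smul)

fun vplus :: "F4 list \<Rightarrow> F4 list \<Rightarrow> F4 list" where
  "vplus (a#as) (b#bs) = f4_add a b # vplus as bs"
| "vplus _ _ = []"

fun vsc :: "F4 \<Rightarrow> F4 list \<Rightarrow> F4 list" where
  "vsc a [] = []" | "vsc a (b#bs) = f4_mul a b # vsc a bs"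

fun wtc :: "F4 list \<Rightarrow> nat" where
  "wtc [] = 0" | "wtc (a#as) = (if a = F0 then wtc as else Suc (wtc as))"

lemma vplus_eq: "vplus x y = vadd x y"
  by (induction x y rule: vplus.induct) simp_all
lemma vsc_eq: "vsc a x = smul a x"
  by (induction x) simp_all
lemma wtc_eq: "wtc x = wt x"
  by (induction x) (simp_all add: F0z)

definition cvalc :: "nat \<Rightarrow> F4 list \<Rightarrow> nat \<Rightarrow> nat" where
  "cvalc th s hw = (let w = wtc s in if th \<le> w then (if hw + w \<le> 7 then 100000 else if hw + w = 8 then 1 else 0) else 0)"

lemma cvalc_eq: "cvalc th s hw = cval th s hw"
  by (simp add: cvalc_def cval_def wtc_eq Let_def)

fun goT :: "nat \<Rightarrow> (F4 list \<times> F4 list \<times> F4 list) list \<Rightarrow> nat \<Rightarrow> F4 list \<Rightarrow> nat \<Rightarrow> nat" where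
  "goT th [] b s hw = 0"
| "goT th (r#rs) 0 s hw = 0"
| "goT th ((r1,r2,r3)#rs) (Suc b) s hw = goT th rs (Suc b) s hw
     + (let s1 = vplus s r1 in cvalc th s1 (Suc hw) + goT th rs b s1 (Suc hw))
     + (let s1 = vplus s r2 in cvalc th s1 (Suc hw) + goT th rs b s1 (Suc hw))
     + (let s1 = vplus s r3 in cvalc th s1 (Suc hw) + goT th rs b s1 (Suc hw))"

definition tri :: "F4 list \<Rightarrow> F4 list \<times> F4 list \<times> F4 list" where
  "tri r = (r, vsc Fw r, vsc Fw2 r)"

lemma goT_eq: "goT th (map tri rs) b s hw = go th rs b s hw"
  by (induction th rs b s hw rule: go.induct) (simp_all add: tri_def vplus_eq vsc_eq cvalc_eq Let_def)

fun goT1 :: "nat \<Rightarrow> (F4 list \<times> F4 list \<times> F4 list) list \<Rightarrow> nat \<Rightarrow> nat \<Rightarrow> nat" where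
  "goT1 th [] b hw = 0"
| "goT1 th (r#rs) 0 hw = 0"
| "goT1 th ((r1,r2,r3)#rs) (Suc b) hw = goT1 th rs (Suc b) hw + (cvalc th r1 (Suc hw) + goT th rs b r1 (Suc hw))"

lemma go_zero: "rowsl n rs \<Longrightarrow> go th rs b (zero_word n) hw = 3 * goT1 th (map tri rs) b hw"
proof (induction rs arbitrary: b)
  case Nil then show ?case by simp
next
  case (Cons r rs)
  have lr: "length r = n" "rowsl n rs" using Cons.prems by auto
  show ?case
  proof (cases b)
    case 0 then show ?thesis by simp
  next
    case (Suc b')
    have e1: "vadd (zero_word n) r = r" using lr by (simp add: vadd_zero_l)
    have e2: "vadd (zero_word n) (smul c r) = smul c r" for c using lr by (simp add: vadd_zero_l)
    have g: "go th rs b' (smul c r) (Suc hw) = go th rs b' r (Suc hw)" if "c \<noteq> 0" for c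
      using go_smul[OF lr(2) lr(1) that] .
    have cv: "cval th (smul c r) (Suc hw) = cval th r (Suc hw)" if "c \<noteq> 0" for c
      using cval_smul[OF that] .
    show ?thesis using Suc Cons.IH[OF lr(2)] e1 e2 g cv
      by (simp add: tri_def goT_eq[unfolded tri_def] cvalc_eq)
  qed
qed

lemma inst2:
  assumes "length A = 12" "list_all (\<lambda>r. length r = 12) A" "orth_chk A" "orth_chk (transp A)"
    "3 * (goT1 0 (map tri A) 4 0 + goT1 5 (map tri (conjT A)) 3 0) = a" "0 < a" "a < 100000"
  shows "\<exists>D. near_extremal_24 D \<and> weight_enumerator D = target (int a)"
proof -
  have r: "rowsl 12 A" using assms(1,2) by (simp add: rowsl_def list_all_iff)
  have "rowsl (length A) (conjT A)" using sq_conjT[of A] by (simp add: sq_def)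
  then have rB: "rowsl 12 (conjT A)" using assms(1) by simp
  show ?thesis
    by (rule inst[OF assms(1-4) _ assms(6,7)]) (simp add: go_zero[OF r] go_zero[OF rB] assms(5)[symmetric])
qed



definition A513 :: "F4 list list" where
  "A513 = [[Fw2, Fw, Fw, Fw2, Fw2, Fw2, Fw, F1, Fw2, Fw, Fw2, F0],
   [F0, F0, F1, Fw2, Fw, Fw2, Fw, F1, F0, F1, Fw, Fw2],
   [F1, F0, Fw, Fw, Fw2, F0, Fw, Fw2, Fw2, F0, F1, F1],
   [F0, Fw, F0, F0, Fw, F1, F1, Fw, Fw, F1, Fw2, Fw2],
   [Fw2, F0, Fw2, F0, F1, F1, Fw2, Fw, Fw2, Fw2, F0, Fw2],
   [F1, F1, F0, F1, F0, Fw, Fw, F0, Fw, Fw, Fw, Fw],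
   [Fw2, F0, Fw, F1, F1, Fw2, Fw, F0, Fw, F1, F0, F1],
   [Fw, F0, F0, F0, Fw, Fw2, Fw, F1, F0, F0, Fw2, F1],
   [Fw2, Fw, F1, Fw, F0, Fw, F0, Fw2, Fw2, F1, F1, F0],
   [Fw, Fw2, Fw2, Fw, Fw2, F1, Fw, F0, Fw2, F1, F0, F0],
   [F1, Fw2, Fw2, Fw, F1, Fw, F1, F0, F1, Fw2, Fw, Fw2],
   [F0, F1, Fw, Fw, F0, Fw2, F1, F0, F0, F0, Fw, F1]]"

lemma ex513: "\<exists>D. near_extremal_24 D \<and> weight_enumerator D = target 513"
proof -
  have c: "3 * (goT1 0 (map tri A513) 4 0 + goT1 5 (map tri (conjT A513)) 3 0) = 513"
    unfolding A513_def by code_simp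
  have o: "orth_chk A513 \<and> orth_chk (transp A513)" unfolding A513_def by code_simp
  have l: "length A513 = 12 \<and> list_all (\<lambda>r. length r = 12) A513" unfolding A513_def by code_simp
  show ?thesis using inst2[of "A513" 513] c o l by simp
qed

definition A522 :: "F4 list list" where
  "A522 = [[Fw2, Fw, Fw, F0, Fw2, F0, F0, Fw, Fw2, Fw, F1, Fw],
   [F1, Fw, F0, F0, F0, Fw, Fw2, F1, F0, Fw, F0, Fw],
   [Fw, Fw, F1, F1, F0, Fw2, F0, F0, Fw2, F1, F1, Fw2],
   [F1, Fw, Fw2, F0, Fw, F0, Fw2, F0, Fw, Fw, F0, F0],
   [Fw, F0, F1, Fw2, F0, F1, Fw, Fw2, Fw2, Fw, Fw, F0],
   [Fw2, Fw2, F1, Fw, F1, Fw, F0, F1, F1, F1, Fw, Fw2],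
   [Fw2, Fw, F1, Fw, F0, Fw, Fw, Fw2, F0, F1, Fw, F0],
   [F0, Fw2, F0, Fw, Fw2, Fw, Fw2, Fw, F0, Fw, Fw, Fw],
   [Fw2, F0, Fw2, Fw, Fw2, Fw, Fw, F0, F1, F0, F1, Fw],
   [Fw, F1, F0, F1, F1, F0, F1, F1, Fw, Fw, F0, F1],
   [Fw2, F0, F1, Fw, F0, Fw2, Fw2, F0, Fw2, Fw2, Fw2, Fw2],
   [Fw, F1, F1, Fw2, F1, Fw, F1, F0, F1, Fw, F1, F1]]"

lemma ex522: "\<exists>D. near_extremal_24 D \<and> weight_enumerator D = target 522"
proof -
  have c: "3 * (goT1 0 (map tri A522) 4 0 + goT1 5 (map tri (conjT A522)) 3 0) = 522"
    unfolding A522_def by code_simp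
  have o: "orth_chk A522 \<and> orth_chk (transp A522)" unfolding A522_def by code_simp
  have l: "length A522 = 12 \<and> list_all (\<lambda>r. length r = 12) A522" unfolding A522_def by code_simp
  show ?thesis using inst2[of "A522" 522] c o l by simp
qed

definition A540 :: "F4 list list" where
  "A540 = [[Fw2, F0, F0, Fw2, Fw2, Fw2, F0, F1, Fw2, Fw2, F1, Fw2],
   [Fw, F0, F1, F0, Fw, Fw2, F1, Fw2, F0, F0, F0, F1],
   [F1, F0, Fw2, Fw, Fw, Fw, Fw2, Fw, Fw2, Fw, Fw, Fw],
   [F1, F1, F0, F1, F0, F1, F1, F1, F0, Fw2, F1, Fw],
   [F1, Fw2, Fw, F1, Fw, Fw2, F0, Fw, F0, F0, Fw2, Fw],
   [Fw2, F0, Fw, Fw, F1, F0, F0, F0, F1, F0, Fw2, Fw2],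
   [Fw, Fw2, Fw2, Fw2, F0, Fw2, F0, Fw, F1, F1, F1, F0],
   [F0, F0, F0, Fw, F0, F1, Fw2, Fw2, Fw2, F1, F1, F0],
   [Fw, F1, F1, F1, F1, F1, Fw, Fw2, F1, Fw, F0, Fw],
   [F1, Fw, Fw, F0, F0, Fw, F0, Fw2, Fw, F0, F0, Fw2],
   [Fw2, F1, Fw2, Fw2, F0, Fw2, Fw, F1, Fw2, F0, F1, F0],
   [Fw2, Fw, Fw, F0, Fw2, Fw2, Fw, Fw, Fw, F1, F1, Fw]]"

lemma ex540: "\<exists>D. near_extremal_24 D \<and> weight_enumerator D = target 540"
proof -
  have c: "3 * (goT1 0 (map tri A540) 4 0 + goT1 5 (map tri (conjT A540)) 3 0) = 540"
    unfolding A540_def by code_simp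
  have o: "orth_chk A540 \<and> orth_chk (transp A540)" unfolding A540_def by code_simp
  have l: "length A540 = 12 \<and> list_all (\<lambda>r. length r = 12) A540" unfolding A540_def by code_simp
  show ?thesis using inst2[of "A540" 540] c o l by simp
qed

definition A549 :: "F4 list list" where
  "A549 = [[F0, F0, Fw, F1, Fw, Fw, F0, F0, F0, Fw2, Fw2, Fw2],
   [F0, F0, F1, F1, F1, F1, Fw, Fw2, F1, Fw, F0, Fw2],
   [Fw2, F1, F0, F0, Fw, F0, F0, Fw2, F0, Fw2, Fw2, Fw2],
   [F0, Fw2, F1, F0, Fw, F1, F1, Fw, Fw2, Fw, F1, F0],
   [F1, Fw2, Fw2, F1, F1, F0, F1, F1, Fw, Fw, F1, Fw2],
   [Fw, Fw, Fw, Fw, Fw, F0, F1, F1, F1, F1, Fw2, Fw2],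
   [F0, F1, Fw, F0, Fw2, F1, Fw2, Fw, Fw, F1, F1, F0],
   [Fw, Fw2, Fw, F0, F0, Fw2, F0, Fw, Fw, Fw, Fw2, Fw2],
   [Fw2, Fw2, F0, F0, Fw, F0, Fw2, F1, Fw, F0, Fw2, F0],
   [Fw, Fw, F1, Fw2, Fw, Fw2, Fw2, Fw, F1, F1, Fw2, F0],
   [F0, F0, F1, Fw, F1, Fw2, Fw2, Fw, Fw2, F1, F1, F0],
   [Fw2, F1, F0, F1, Fw2, F0, Fw2, Fw2, F0, F1, Fw, F1]]"

lemma ex549: "\<exists>D. near_extremal_24 D \<and> weight_enumerator D = target 549"
proof -
  have c: "3 * (goT1 0 (map tri A549) 4 0 + goT1 5 (map tri (conjT A549)) 3 0) = 549"
    unfolding A549_def by code_simp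
  have o: "orth_chk A549 \<and> orth_chk (transp A549)" unfolding A549_def by code_simp
  have l: "length A549 = 12 \<and> list_all (\<lambda>r. length r = 12) A549" unfolding A549_def by code_simp
  show ?thesis using inst2[of "A549" 549] c o l by simp
qed

definition A576 :: "F4 list list" where
  "A576 = [[F0, F0, Fw2, F1, Fw2, F1, F0, F1, F1, Fw, Fw, Fw],
   [Fw, F1, F0, F0, F1, F0, F1, Fw, F0, F1, F1, F0],
   [F1, Fw, F0, F0, F0, Fw2, F0, Fw2, Fw, Fw, F1, F0],
   [Fw, F1, Fw, Fw2, Fw, Fw2, F1, Fw, Fw, F0, Fw, Fw],
   [F0, Fw2, Fw, Fw2, Fw2, Fw2, F0, Fw, F1, F1, F0, Fw2],
   [Fw, Fw2, F1, Fw, F1, F0, F0, Fw2, Fw2, F1, F0, Fw],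
   [Fw2, Fw2, Fw, F0, Fw2, Fw, Fw, Fw, F0, F0, F1, Fw],
   [F0, Fw2, Fw, F0, Fw, F0, F1, F1, Fw, F1, Fw, Fw],
   [F1, Fw, Fw2, Fw2, F1, Fw2, Fw, F0, F0, Fw, F0, Fw2],
   [F1, Fw2, F0, Fw2, Fw, Fw, Fw2, F0, F0, Fw2, Fw, Fw],
   [Fw2, F1, Fw, Fw, F1, F1, F0, F1, Fw2, Fw, Fw2, F1],
   [Fw2, F1, Fw2, F0, Fw2, Fw2, F1, F0, F0, F0, F1, F0]]"

lemma ex576: "\<exists>D. near_extremal_24 D \<and> weight_enumerator D = target 576"
proof -
  have c: "3 * (goT1 0 (map tri A576) 4 0 + goT1 5 (map tri (conjT A576)) 3 0) = 576"
    unfolding A576_def by code_simp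
  have o: "orth_chk A576 \<and> orth_chk (transp A576)" unfolding A576_def by code_simp
  have l: "length A576 = 12 \<and> list_all (\<lambda>r. length r = 12) A576" unfolding A576_def by code_simp
  show ?thesis using inst2[of "A576" 576] c o l by simp
qed

definition A594 :: "F4 list list" where
  "A594 = [[Fw, Fw, Fw, Fw2, Fw, F0, F1, F0, Fw, Fw, F0, F1],
   [F0, Fw, F0, Fw, Fw, F1, Fw2, Fw, F0, Fw2, F1, Fw],
   [Fw, Fw2, Fw2, Fw2, F0, Fw2, F0, F1, Fw2, F0, F1, Fw],
   [F1, Fw, Fw2, F0, F1, F1, Fw, Fw2, Fw, Fw2, Fw, Fw],
   [F1, F1, F1, Fw2, Fw, Fw, Fw2, F1, Fw2, Fw2, F1, F0],
   [F0, Fw, Fw2, Fw, Fw2, F1, Fw2, F1, F1, Fw2, F0, F0],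
   [Fw2, F0, F0, Fw2, Fw, F1, F1, Fw, Fw2, Fw, Fw, F0],
   [Fw2, F1, Fw, Fw, Fw2, F0, Fw, F0, F0, Fw, F1, Fw],
   [Fw, F0, F1, F0, F1, F0, Fw2, Fw, Fw, Fw2, F1, F1],
   [F1, Fw2, Fw2, F1, F1, F1, Fw2, F0, F1, Fw, Fw2, Fw2],
   [Fw, Fw, Fw2, F0, Fw2, Fw2, Fw2, F1, F1, Fw, Fw, F1],
   [F0, F0, F0, F1, Fw2, F1, Fw2, F1, F0, Fw, F0, Fw]]"

lemma ex594: "\<exists>D. near_extremal_24 D \<and> weight_enumerator D = target 594"
proof -
  have c: "3 * (goT1 0 (map tri A594) 4 0 + goT1 5 (map tri (conjT A594)) 3 0) = 594"
    unfolding A594_def by code_simp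
  have o: "orth_chk A594 \<and> orth_chk (transp A594)" unfolding A594_def by code_simp
  have l: "length A594 = 12 \<and> list_all (\<lambda>r. length r = 12) A594" unfolding A594_def by code_simp
  show ?thesis using inst2[of "A594" 594] c o l by simp
qed

definition A621 :: "F4 list list" where
  "A621 = [[F0, Fw2, Fw, Fw2, F0, F0, F0, F1, F0, Fw2, F1, Fw],
   [F1, Fw, F0, F0, F1, Fw, Fw, F1, F0, F1, Fw2, F1],
   [F0, Fw, Fw, Fw2, Fw, Fw, F0, Fw, Fw2, F1, Fw2, F0],
   [F0, Fw2, F1, Fw2, Fw, F0, Fw2, F1, Fw, F0, Fw2, Fw],
   [Fw, F0, F0, Fw2, F0, Fw2, F1, Fw2, F1, Fw, Fw2, Fw2],
   [Fw, F0, F0, F1, Fw, F1, F1, Fw2, F0, Fw2, Fw2, F1],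
   [F1, Fw, F1, Fw2, Fw2, F0, Fw2, Fw2, Fw, Fw2, Fw, Fw],
   [F1, Fw, F1, F0, Fw, F0, Fw, F1, Fw, F0, Fw, F1],
   [Fw, Fw, Fw, Fw2, Fw, F1, Fw2, Fw, Fw, F0, Fw2, Fw2],
   [Fw2, Fw2, Fw2, F1, Fw, F1, F0, F0, Fw2, F1, F0, F1],
   [Fw2, F1, F0, F0, F0, F1, F1, Fw, F1, F1, F1, F1],
   [F1, F0, F0, Fw, Fw2, F0, Fw2, F1, F1, F1, Fw2, F1]]"

lemma ex621: "\<exists>D. near_extremal_24 D \<and> weight_enumerator D = target 621"
proof -
  have c: "3 * (goT1 0 (map tri A621) 4 0 + goT1 5 (map tri (conjT A621)) 3 0) = 621"
    unfolding A621_def by code_simp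
  have o: "orth_chk A621 \<and> orth_chk (transp A621)" unfolding A621_def by code_simp
  have l: "length A621 = 12 \<and> list_all (\<lambda>r. length r = 12) A621" unfolding A621_def by code_simp
  show ?thesis using inst2[of "A621" 621] c o l by simp
qed

definition A630 :: "F4 list list" where
  "A630 = [[Fw, Fw2, Fw2, F1, F1, F0, F0, Fw2, Fw2, Fw2, F0, Fw2],
   [Fw2, Fw, F1, Fw2, Fw2, F1, Fw2, Fw, F1, F1, Fw2, F0],
   [Fw2, Fw, Fw, F0, Fw, F0, Fw, Fw2, Fw2, Fw2, F0, Fw2],
   [F1, Fw2, F0, F1, F1, Fw, Fw, Fw, F1, Fw2, F1, F1],
   [F1, F1, F0, F0, F0, Fw2, F0, Fw, F1, Fw, F0, Fw],
   [F1, F0, Fw, Fw, Fw2, F1, F0, F0, Fw2, Fw, F1, Fw],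
   [F1, Fw2, F1, Fw2, Fw2, F1, Fw, F0, F0, Fw2, F0, Fw2],
   [Fw2, Fw2, Fw, Fw2, Fw, F0, Fw2, Fw, F1, F0, F1, F0],
   [Fw2, F1, Fw, Fw, Fw2, F0, F1, Fw2, Fw2, F1, F0, F0],
   [F1, F1, F1, Fw2, F0, Fw2, Fw2, Fw, Fw2, Fw2, F1, Fw],
   [Fw, Fw, Fw, F1, Fw2, F0, Fw2, F0, Fw2, F0, Fw2, F1],
   [F0, Fw2, F0, F0, F0, F1, F1, Fw2, Fw, F0, Fw2, Fw]]"

lemma ex630: "\<exists>D. near_extremal_24 D \<and> weight_enumerator D = target 630"
proof -
  have c: "3 * (goT1 0 (map tri A630) 4 0 + goT1 5 (map tri (conjT A630)) 3 0) = 630"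
    unfolding A630_def by code_simp
  have o: "orth_chk A630 \<and> orth_chk (transp A630)" unfolding A630_def by code_simp
  have l: "length A630 = 12 \<and> list_all (\<lambda>r. length r = 12) A630" unfolding A630_def by code_simp
  show ?thesis using inst2[of "A630" 630] c o l by simp
qed

definition A657 :: "F4 list list" where
  "A657 = [[Fw, F1, Fw2, Fw2, Fw2, F0, Fw, Fw2, Fw2, F1, F1, Fw],
   [F0, F0, F0, Fw, Fw, Fw, F1, Fw2, F0, Fw2, F0, Fw],
   [Fw2, Fw, Fw2, F1, F0, Fw, Fw2, F0, Fw2, Fw2, Fw2, F0],
   [F1, F0, F1, Fw, Fw2, Fw, F1, Fw2, Fw, Fw2, Fw, F1],
   [Fw2, F1, Fw, Fw, F0, Fw2, Fw, F0, F1, Fw2, Fw2, F0],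
   [F0, F1, F1, F0, Fw2, F0, F1, Fw2, Fw2, F1, F0, F0],
   [Fw2, Fw, F0, F0, F1, F0, F1, F0, Fw2, F0, Fw, Fw2],
   [F1, F1, F1, F0, F0, Fw2, Fw, F1, Fw2, F1, Fw2, F0],
   [Fw2, Fw, F0, F1, F1, Fw2, F0, F0, Fw2, F1, F0, F0],
   [Fw2, F1, F1, Fw2, Fw, Fw, F0, Fw, F0, F0, F1, Fw],
   [F0, F0, F1, Fw, Fw, F1, F0, F0, F1, F0, Fw2, F1],
   [F1, F1, Fw, Fw, Fw, F1, Fw, Fw2, F0, Fw2, Fw2, Fw]]"

lemma ex657: "\<exists>D. near_extremal_24 D \<and> weight_enumerator D = target 657"
proof -
  have c: "3 * (goT1 0 (map tri A657) 4 0 + goT1 5 (map tri (conjT A657)) 3 0) = 657"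
    unfolding A657_def by code_simp
  have o: "orth_chk A657 \<and> orth_chk (transp A657)" unfolding A657_def by code_simp
  have l: "length A657 = 12 \<and> list_all (\<lambda>r. length r = 12) A657" unfolding A657_def by code_simp
  show ?thesis using inst2[of "A657" 657] c o l by simp
qed

definition A684 :: "F4 list list" where
  "A684 = [[F0, F1, F0, F1, Fw2, F0, F1, F1, F1, Fw2, Fw2, F1],
   [F1, F1, F1, F0, Fw, Fw, Fw2, F1, Fw, Fw2, F1, F1],
   [F0, Fw, Fw2, F1, F1, F0, F0, F1, Fw, F0, F0, Fw],
   [F0, Fw, Fw2, Fw2, F1, Fw, F0, Fw, F1, F0, Fw2, F1],
   [F0, F0, F1, F0, Fw2, Fw2, Fw2, F0, F0, Fw2, Fw2, Fw],
   [Fw2, F0, Fw2, Fw, F0, F0, F1, F0, F0, Fw2, Fw, F1],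
   [Fw2, Fw, Fw2, F1, Fw2, F1, Fw, F1, F0, F0, F0, F1],
   [F1, Fw2, F0, Fw2, F1, Fw, F1, F0, F0, F0, Fw, F0],
   [F1, Fw, Fw, Fw, Fw2, Fw, Fw2, Fw, Fw2, F1, F0, F1],
   [F0, Fw, Fw2, F0, Fw2, Fw2, F0, F1, F0, F0, Fw2, Fw2],
   [Fw2, F0, Fw, F1, F1, F0, F1, Fw, Fw, Fw2, Fw, F0],
   [Fw, F1, F0, Fw2, F1, F0, Fw2, Fw2, Fw2, Fw2, F1, F0]]"

lemma ex684: "\<exists>D. near_extremal_24 D \<and> weight_enumerator D = target 684"
proof -
  have c: "3 * (goT1 0 (map tri A684) 4 0 + goT1 5 (map tri (conjT A684)) 3 0) = 684"
    unfolding A684_def by code_simp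
  have o: "orth_chk A684 \<and> orth_chk (transp A684)" unfolding A684_def by code_simp
  have l: "length A684 = 12 \<and> list_all (\<lambda>r. length r = 12) A684" unfolding A684_def by code_simp
  show ?thesis using inst2[of "A684" 684] c o l by simp
qed

definition A702 :: "F4 list list" where
  "A702 = [[F0, F1, Fw, F1, F1, Fw, Fw, Fw2, Fw2, F1, F0, F0],
   [F0, Fw, F1, Fw, F0, Fw, Fw, Fw, Fw2, F1, F0, Fw2],
   [F1, F0, Fw, F0, F1, Fw, Fw, F0, F0, F0, F1, F1],
   [Fw, Fw2, F0, F0, Fw2, Fw2, F1, Fw, F0, Fw, F0, F0],
   [F1, Fw, Fw2, Fw, Fw2, Fw, F1, Fw, Fw, Fw2, Fw, F0],
   [F0, F1, Fw2, Fw2, Fw, F0, Fw, Fw, Fw, Fw2, F0, F1],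
   [F0, F1, Fw2, F0, Fw2, Fw2, F1, F1, Fw, F0, Fw2, Fw2],
   [F1, Fw, Fw, F0, F1, Fw, F1, Fw2, F1, Fw2, Fw, F1],
   [Fw, Fw, F1, Fw, Fw, F1, F0, Fw, F1, Fw2, F1, F1],
   [Fw, Fw2, Fw, F1, F0, Fw2, F1, Fw2, F0, Fw2, F0, Fw],
   [F0, F1, Fw2, F1, F1, Fw, Fw, Fw, F0, F0, Fw, F1],
   [F1, F1, F1, F0, F0, F1, Fw, Fw2, F0, F1, Fw, Fw]]"

lemma ex702: "\<exists>D. near_extremal_24 D \<and> weight_enumerator D = target 702"
proof -
  have c: "3 * (goT1 0 (map tri A702) 4 0 + goT1 5 (map tri (conjT A702)) 3 0) = 702"
    unfolding A702_def by code_simp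
  have o: "orth_chk A702 \<and> orth_chk (transp A702)" unfolding A702_def by code_simp
  have l: "length A702 = 12 \<and> list_all (\<lambda>r. length r = 12) A702" unfolding A702_def by code_simp
  show ?thesis using inst2[of "A702" 702] c o l by simp
qed

definition A738 :: "F4 list list" where
  "A738 = [[F1, F1, F1, Fw2, Fw, Fw, F1, F1, F1, Fw, F1, F0],
   [Fw, Fw2, Fw2, F0, F1, Fw2, F0, F0, F0, F0, Fw2, Fw],
   [F1, Fw2, Fw, F0, Fw, F1, F0, F1, Fw, Fw, F0, Fw],
   [Fw, F0, Fw2, F1, F1, F0, Fw2, Fw, Fw2, Fw2, F0, Fw],
   [Fw2, F1, Fw, F1, Fw2, Fw, F1, Fw2, Fw, Fw, F0, F1],
   [Fw, F0, Fw2, Fw, Fw, Fw2, Fw2, F1, F1, F0, Fw, F0],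
   [F0, F1, F1, Fw, F0, Fw2, F1, F0, F1, F1, Fw, Fw2],
   [F1, Fw2, Fw, Fw2, F1, F1, F0, Fw, Fw, F0, F1, F0],
   [Fw2, F0, Fw, Fw2, Fw, Fw, F1, F1, Fw2, Fw, Fw, F1],
   [Fw2, Fw2, F1, F0, F0, F1, F0, Fw2, F0, F1, Fw, F0],
   [F1, F1, F1, Fw2, F0, F0, F0, F0, F0, Fw, F1, Fw],
   [Fw2, Fw2, F0, F1, F1, F0, Fw2, F1, F1, F1, F1, F0]]"

lemma ex738: "\<exists>D. near_extremal_24 D \<and> weight_enumerator D = target 738"
proof -
  have c: "3 * (goT1 0 (map tri A738) 4 0 + goT1 5 (map tri (conjT A738)) 3 0) = 738"
    unfolding A738_def by code_simp
  have o: "orth_chk A738 \<and> orth_chk (transp A738)" unfolding A738_def by code_simp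
  have l: "length A738 = 12 \<and> list_all (\<lambda>r. length r = 12) A738" unfolding A738_def by code_simp
  show ?thesis using inst2[of "A738" 738] c o l by simp
qed

definition A756 :: "F4 list list" where
  "A756 = [[Fw2, F1, Fw, Fw2, Fw, F1, F0, Fw, F1, F0, Fw2, F0],
   [Fw, F0, F1, Fw2, Fw2, F1, Fw, Fw2, F0, Fw, F0, Fw2],
   [Fw, Fw2, Fw, F0, Fw, F1, Fw, Fw2, F1, Fw2, F1, Fw],
   [F1, F0, F0, F0, Fw2, Fw2, F1, Fw2, F1, F0, F0, Fw],
   [F0, F0, F0, Fw, Fw2, F0, F0, Fw, Fw2, Fw2, Fw, Fw],
   [F1, F0, F0, F0, Fw2, F0, F1, F0, Fw, F1, F1, F1],
   [Fw, F1, F1, Fw, Fw, Fw, F0, F0, F0, F1, Fw2, Fw2],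
   [F0, Fw2, F1, Fw2, F1, Fw, Fw2, Fw, F1, Fw, F0, F0],
   [F0, F0, Fw2, F0, Fw2, Fw2, F0, F1, Fw, F1, F1, F0],
   [Fw, Fw2, F1, F0, F0, Fw2, Fw2, F0, F1, Fw2, Fw2, Fw],
   [Fw2, Fw, Fw, Fw2, F1, F1, F1, F0, F0, F0, Fw2, Fw2],
   [Fw, Fw2, Fw2, F1, F1, F0, F0, F0, Fw, F1, Fw2, Fw2]]"

lemma ex756: "\<exists>D. near_extremal_24 D \<and> weight_enumerator D = target 756"
proof -
  have c: "3 * (goT1 0 (map tri A756) 4 0 + goT1 5 (map tri (conjT A756)) 3 0) = 756"
    unfolding A756_def by code_simp
  have o: "orth_chk A756 \<and> orth_chk (transp A756)" unfolding A756_def by code_simp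
  have l: "length A756 = 12 \<and> list_all (\<lambda>r. length r = 12) A756" unfolding A756_def by code_simp
  show ?thesis using inst2[of "A756" 756] c o l by simp
qed

definition A765 :: "F4 list list" where
  "A765 = [[F0, F1, Fw2, Fw2, Fw, F0, Fw2, F0, F1, Fw, F1, F1],
   [F1, F0, F0, F0, F0, F0, Fw, F1, Fw, F1, Fw2, F1],
   [F1, Fw2, Fw, Fw, Fw2, F1, F0, F1, F0, F0, Fw, Fw2],
   [F0, F1, Fw, F0, Fw, F1, Fw2, Fw, F0, Fw, Fw, F1],
   [Fw, F0, F0, F0, Fw, F1, F0, Fw2, F0, Fw2, Fw, F1],
   [F1, F1, F1, F0, Fw, F1, F1, Fw, Fw, F1, Fw, Fw2],
   [F1, F0, Fw, F1, F1, F0, Fw, Fw, F1, Fw2, F0, Fw],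
   [F1, Fw2, Fw, Fw, F0, F1, F1, F1, Fw, Fw, Fw2, F1],
   [Fw2, Fw2, F0, Fw, F0, Fw2, F0, Fw2, F0, Fw, F1, F0],
   [Fw2, F0, F0, Fw, F1, F1, F0, Fw, F1, F0, F1, F0],
   [Fw, F0, F1, Fw, F1, Fw, F0, Fw, Fw, F0, Fw, Fw],
   [F0, Fw, F0, F0, F1, Fw, F1, Fw, F0, Fw, Fw, F0]]"

lemma ex765: "\<exists>D. near_extremal_24 D \<and> weight_enumerator D = target 765"
proof -
  have c: "3 * (goT1 0 (map tri A765) 4 0 + goT1 5 (map tri (conjT A765)) 3 0) = 765"
    unfolding A765_def by code_simp
  have o: "orth_chk A765 \<and> orth_chk (transp A765)" unfolding A765_def by code_simp
  have l: "length A765 = 12 \<and> list_all (\<lambda>r. length r = 12) A765" unfolding A765_def by code_simp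
  show ?thesis using inst2[of "A765" 765] c o l by simp
qed

definition A792 :: "F4 list list" where
  "A792 = [[F1, Fw2, F1, Fw2, F1, Fw2, F1, F1, F1, Fw, Fw2, F0],
   [Fw2, Fw2, F0, Fw2, F0, F0, F1, F1, F0, F0, Fw, F1],
   [Fw2, F0, F0, F0, F1, Fw2, F1, F1, Fw2, F0, F0, F1],
   [F0, Fw2, F1, Fw2, F0, F1, Fw2, Fw, F0, F1, Fw2, Fw2],
   [Fw, Fw2, F1, F1, F0, F1, F0, F1, Fw, F0, Fw2, Fw2],
   [Fw2, Fw2, F0, Fw2, F0, F1, Fw, Fw2, F0, Fw, Fw2, Fw],
   [F0, Fw2, Fw2, Fw, Fw2, F0, Fw, F0, F1, F1, F1, Fw2],
   [F1, F0, Fw, F0, Fw, F0, Fw2, F0, F1, F1, F0, F1],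
   [F0, Fw2, F1, F1, F1, F1, F1, Fw, Fw, Fw2, F1, Fw2],
   [F0, Fw, Fw, F1, F0, Fw2, Fw2, F0, F0, Fw, F0, Fw],
   [Fw, Fw, F0, F0, Fw, F1, Fw, F1, F0, F0, F1, F0],
   [F0, F0, F0, Fw2, Fw2, F1, Fw2, Fw2, Fw2, F0, Fw, F0]]"

lemma ex792: "\<exists>D. near_extremal_24 D \<and> weight_enumerator D = target 792"
proof -
  have c: "3 * (goT1 0 (map tri A792) 4 0 + goT1 5 (map tri (conjT A792)) 3 0) = 792"
    unfolding A792_def by code_simp
  have o: "orth_chk A792 \<and> orth_chk (transp A792)" unfolding A792_def by code_simp
  have l: "length A792 = 12 \<and> list_all (\<lambda>r. length r = 12) A792" unfolding A792_def by code_simp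
  show ?thesis using inst2[of "A792" 792] c o l by simp
qed

definition A837 :: "F4 list list" where
  "A837 = [[Fw, F0, Fw2, Fw2, F1, F1, Fw, Fw2, F1, Fw, Fw, Fw],
   [F0, Fw2, Fw2, Fw, F0, Fw, Fw2, F1, Fw, F1, F0, Fw],
   [F0, F0, F0, F1, Fw2, F1, Fw, Fw, F0, F1, Fw, F0],
   [F0, F0, F0, Fw2, F1, F0, Fw, F1, Fw2, Fw, Fw, F0],
   [F0, F1, F0, F1, F0, F0, F1, Fw2, Fw2, Fw, Fw2, F0],
   [Fw2, Fw, Fw, Fw, F0, F0, Fw, F0, F0, Fw2, F0, Fw],
   [Fw2, F0, F0, F0, Fw2, F1, Fw, Fw2, Fw2, Fw, Fw, F1],
   [F1, F0, Fw, Fw, F1, Fw2, F0, F0, F0, Fw2, F0, F1],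
   [Fw2, Fw, Fw2, Fw, F0, Fw, Fw2, Fw, F1, F1, Fw2, F1],
   [F1, Fw2, F0, F1, Fw2, F1, Fw, F0, F0, F0, F0, Fw2],
   [F0, Fw, Fw, Fw2, Fw, F0, F1, F0, F1, Fw2, F0, F0],
   [Fw2, Fw, F1, Fw2, F0, F0, F1, F0, F0, F1, Fw, F0]]"

lemma ex837: "\<exists>D. near_extremal_24 D \<and> weight_enumerator D = target 837"
proof -
  have c: "3 * (goT1 0 (map tri A837) 4 0 + goT1 5 (map tri (conjT A837)) 3 0) = 837"
    unfolding A837_def by code_simp
  have o: "orth_chk A837 \<and> orth_chk (transp A837)" unfolding A837_def by code_simp
  have l: "length A837 = 12 \<and> list_all (\<lambda>r. length r = 12) A837" unfolding A837_def by code_simp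
  show ?thesis using inst2[of "A837" 837] c o l by simp
qed

definition A846 :: "F4 list list" where
  "A846 = [[Fw, Fw2, Fw, F0, Fw, F0, Fw2, Fw2, F0, F0, F1, F0],
   [Fw, F1, F1, Fw2, Fw2, F1, F0, Fw, Fw2, Fw2, F1, Fw2],
   [F0, Fw2, Fw2, Fw2, F1, F1, Fw2, F1, F1, Fw, Fw2, Fw],
   [Fw2, Fw2, Fw, Fw, F1, Fw, F1, Fw, F0, Fw2, F0, F0],
   [Fw2, Fw, F0, F1, Fw, F0, Fw, F0, F1, Fw2, Fw2, Fw2],
   [F0, F1, F0, Fw, F1, F0, Fw2, F1, Fw2, F1, Fw, F1],
   [F0, F1, Fw, Fw2, F1, F0, Fw2, F1, F0, F0, Fw2, F0],
   [Fw2, Fw, F0, Fw2, Fw, F1, Fw2, F1, Fw2, Fw2, Fw2, Fw],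
   [Fw2, F0, Fw, Fw2, F1, Fw2, Fw, Fw, Fw, F1, F0, F0],
   [F1, Fw, F0, Fw2, Fw, Fw, F0, Fw, F0, Fw2, Fw, Fw],
   [Fw, Fw, Fw2, Fw, Fw, F0, Fw, Fw2, F0, Fw2, Fw2, F0],
   [Fw2, Fw, F0, Fw2, F0, Fw2, F0, Fw2, F1, F0, F0, F1]]"

lemma ex846: "\<exists>D. near_extremal_24 D \<and> weight_enumerator D = target 846"
proof -
  have c: "3 * (goT1 0 (map tri A846) 4 0 + goT1 5 (map tri (conjT A846)) 3 0) = 846"
    unfolding A846_def by code_simp
  have o: "orth_chk A846 \<and> orth_chk (transp A846)" unfolding A846_def by code_simp
  have l: "length A846 = 12 \<and> list_all (\<lambda>r. length r = 12) A846" unfolding A846_def by code_simp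
  show ?thesis using inst2[of "A846" 846] c o l by simp
qed

definition A864 :: "F4 list list" where
  "A864 = [[Fw, Fw2, Fw, Fw, Fw2, Fw, F1, F0, F0, Fw, F0, F1],
   [F0, F1, F0, F0, F0, Fw2, Fw2, Fw, F1, F1, Fw2, F0],
   [F1, Fw2, F0, Fw2, Fw, Fw, F0, Fw2, F1, F0, Fw, Fw],
   [F1, Fw2, F1, Fw2, Fw2, F0, F1, Fw, Fw2, Fw, Fw2, Fw],
   [F1, F1, F1, Fw2, F1, Fw, F1, F0, Fw, F1, Fw, F1],
   [F0, F1, Fw, F0, F1, Fw2, Fw, Fw, F0, Fw, F0, F0],
   [F1, Fw2, Fw2, F0, F0, Fw2, Fw2, F0, F0, Fw2, F0, Fw2],
   [F0, Fw2, Fw2, Fw2, Fw2, Fw2, Fw2, F1, Fw, Fw2, Fw2, Fw2],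
   [F0, F0, Fw2, Fw2, F1, F1, F0, F0, Fw, Fw, F1, F0],
   [F0, Fw, F1, F0, F1, F1, F0, F1, F1, Fw, F0, F0],
   [F1, Fw, Fw, Fw, Fw, Fw2, Fw2, F0, F0, Fw2, Fw2, F0],
   [F1, Fw, F0, F0, F0, F1, Fw2, F1, F0, Fw, F0, F1]]"

lemma ex864: "\<exists>D. near_extremal_24 D \<and> weight_enumerator D = target 864"
proof -
  have c: "3 * (goT1 0 (map tri A864) 4 0 + goT1 5 (map tri (conjT A864)) 3 0) = 864"
    unfolding A864_def by code_simp
  have o: "orth_chk A864 \<and> orth_chk (transp A864)" unfolding A864_def by code_simp
  have l: "length A864 = 12 \<and> list_all (\<lambda>r. length r = 12) A864" unfolding A864_def by code_simp
  show ?thesis using inst2[of "A864" 864] c o l by simp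
qed

definition A900 :: "F4 list list" where
  "A900 = [[Fw, Fw, Fw, Fw, Fw2, F0, Fw2, F0, F1, F1, F0, F1],
   [F0, F1, Fw2, F1, Fw2, Fw2, Fw, F1, Fw2, F0, F0, Fw2],
   [Fw2, Fw2, F1, F0, Fw, F0, Fw2, F0, F1, F1, F1, F1],
   [F1, Fw2, F1, F0, F0, F0, F1, Fw, Fw2, F0, F0, Fw2],
   [F0, F1, Fw, F1, Fw2, F1, F1, F1, Fw2, Fw2, Fw, Fw],
   [F1, F0, F0, Fw2, F0, F1, F0, F0, F1, Fw, Fw2, Fw],
   [Fw2, Fw2, Fw, F1, Fw2, F1, F1, F0, F1, Fw, Fw2, Fw],
   [F1, F0, F0, F1, F0, Fw2, F0, Fw2, Fw, Fw, Fw, F0],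
   [F0, F0, Fw, F0, Fw, F0, Fw, Fw2, Fw2, F0, F1, Fw],
   [F1, Fw, F1, F1, F0, F0, F0, F1, Fw2, Fw, Fw, Fw2],
   [F0, F0, F0, Fw2, Fw2, Fw2, Fw2, F1, Fw2, Fw, F1, Fw2],
   [F0, F0, F1, Fw, F0, F1, Fw, F0, F0, Fw2, Fw2, Fw]]"

lemma ex900: "\<exists>D. near_extremal_24 D \<and> weight_enumerator D = target 900"
proof -
  have c: "3 * (goT1 0 (map tri A900) 4 0 + goT1 5 (map tri (conjT A900)) 3 0) = 900"
    unfolding A900_def by code_simp
  have o: "orth_chk A900 \<and> orth_chk (transp A900)" unfolding A900_def by code_simp
  have l: "length A900 = 12 \<and> list_all (\<lambda>r. length r = 12) A900" unfolding A900_def by code_simp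
  show ?thesis using inst2[of "A900" 900] c o l by simp
qed

definition A954 :: "F4 list list" where
  "A954 = [[Fw, Fw, Fw2, Fw2, Fw2, Fw2, F1, Fw2, Fw2, F1, Fw, F0],
   [Fw2, Fw, Fw, F1, Fw, Fw, Fw2, F1, Fw2, F1, F1, F0],
   [F0, Fw, Fw, F0, F1, Fw2, F0, Fw2, F1, F1, F1, Fw2],
   [F0, F1, F1, Fw2, Fw, F1, F0, Fw, F0, F0, Fw2, F0],
   [Fw, F0, F1, F0, Fw2, F0, F1, Fw2, Fw, Fw2, Fw2, Fw],
   [F0, Fw, F1, F0, Fw2, Fw2, F1, F0, F1, Fw2, F1, Fw],
   [F1, Fw2, F0, F0, F1, F0, F0, F1, F1, Fw, Fw, F0],
   [Fw2, F1, F1, Fw2, F0, F0, Fw, F1, F0, F1, F1, F1],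
   [Fw2, Fw2, Fw2, Fw, F0, F0, Fw2, Fw, F0, F1, F1, Fw],
   [F0, Fw2, F1, F0, F0, F0, F1, Fw, F0, Fw2, Fw, Fw],
   [F0, Fw2, Fw2, Fw, Fw, Fw2, Fw2, Fw, F0, Fw, F0, F1],
   [F1, Fw, F1, Fw, Fw, F1, Fw2, Fw, Fw2, F1, Fw2, F0]]"

lemma ex954: "\<exists>D. near_extremal_24 D \<and> weight_enumerator D = target 954"
proof -
  have c: "3 * (goT1 0 (map tri A954) 4 0 + goT1 5 (map tri (conjT A954)) 3 0) = 954"
    unfolding A954_def by code_simp
  have o: "orth_chk A954 \<and> orth_chk (transp A954)" unfolding A954_def by code_simp
  have l: "length A954 = 12 \<and> list_all (\<lambda>r. length r = 12) A954" unfolding A954_def by code_simp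
  show ?thesis using inst2[of "A954" 954] c o l by simp
qed

definition A981 :: "F4 list list" where
  "A981 = [[F0, Fw, Fw2, Fw2, F1, F1, Fw2, Fw, Fw2, Fw, Fw, Fw],
   [Fw, Fw2, F0, F1, F1, F0, Fw, Fw2, F1, Fw, F0, F1],
   [Fw2, F1, F1, Fw, F1, Fw2, Fw2, Fw2, Fw, F1, F0, F1],
   [F1, Fw2, Fw2, F0, F0, F1, Fw, F0, F0, F0, F1, Fw2],
   [Fw2, Fw, F0, F0, F0, F0, Fw, F0, Fw2, Fw2, Fw2, F1],
   [F0, Fw, F0, F0, F0, Fw2, F1, F0, Fw, F1, F1, F1],
   [F1, Fw2, F1, Fw, F1, F0, Fw2, F0, F0, F1, F0, F0],
   [F0, Fw, Fw2, F0, F1, Fw, F1, F1, Fw2, Fw2, F0, Fw],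
   [Fw, F1, Fw, F1, F1, F1, F1, F0, Fw2, Fw, Fw, Fw],
   [Fw, F0, Fw, Fw2, F1, F1, F1, Fw2, F0, F1, F0, Fw],
   [Fw2, F0, F0, Fw, F0, F1, F0, F1, Fw2, Fw, Fw, F0],
   [Fw2, F0, F0, F0, F0, F1, F1, Fw, F1, F1, F1, F0]]"

lemma ex981: "\<exists>D. near_extremal_24 D \<and> weight_enumerator D = target 981"
proof -
  have c: "3 * (goT1 0 (map tri A981) 4 0 + goT1 5 (map tri (conjT A981)) 3 0) = 981"
    unfolding A981_def by code_simp
  have o: "orth_chk A981 \<and> orth_chk (transp A981)" unfolding A981_def by code_simp
  have l: "length A981 = 12 \<and> list_all (\<lambda>r. length r = 12) A981" unfolding A981_def by code_simp
  show ?thesis using inst2[of "A981" 981] c o l by simp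
qed

definition A1026 :: "F4 list list" where
  "A1026 = [[Fw, F1, Fw, F0, Fw2, Fw2, Fw2, Fw, F1, Fw, Fw, Fw],
   [F1, F0, F1, F0, F0, F1, F0, F0, F1, F1, F1, F1],
   [F0, Fw, Fw2, Fw, F0, F0, Fw, F1, F1, F1, Fw, F1],
   [Fw2, F0, Fw2, F0, Fw2, Fw2, Fw, Fw, F0, Fw, Fw2, Fw],
   [F1, F0, F1, F1, F1, F0, F1, F0, F0, F0, F1, F1],
   [Fw, F0, F1, Fw, Fw, F1, F0, F1, Fw2, Fw, F0, Fw2],
   [F0, F1, F1, F0, F1, F1, F1, F0, F0, F1, F1, F0],
   [Fw, Fw2, F1, Fw2, F1, Fw, F1, Fw, F0, F1, F1, F1],
   [Fw, Fw2, Fw2, F0, Fw, F0, Fw, F0, Fw, Fw, Fw, Fw2],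
   [F1, Fw2, Fw, Fw2, F0, F1, Fw, F1, F1, F1, Fw2, F1],
   [F0, Fw, Fw, Fw, F1, F1, Fw, F0, F1, F1, Fw2, F0],
   [F1, F0, F0, F1, F1, F1, F0, F1, F0, F1, F1, F0]]"

lemma ex1026: "\<exists>D. near_extremal_24 D \<and> weight_enumerator D = target 1026"
proof -
  have c: "3 * (goT1 0 (map tri A1026) 4 0 + goT1 5 (map tri (conjT A1026)) 3 0) = 1026"
    unfolding A1026_def by code_simp
  have o: "orth_chk A1026 \<and> orth_chk (transp A1026)" unfolding A1026_def by code_simp
  have l: "length A1026 = 12 \<and> list_all (\<lambda>r. length r = 12) A1026" unfolding A1026_def by code_simp
  show ?thesis using inst2[of "A1026" 1026] c o l by simp
qed

definition A1089 :: "F4 list list" where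
  "A1089 = [[F0, F1, F1, Fw, Fw, Fw2, Fw, F0, Fw2, Fw, F0, Fw],
   [F0, Fw, F0, Fw2, Fw, Fw2, Fw2, Fw, Fw2, Fw2, F0, Fw],
   [F0, Fw, F1, F0, F0, F0, F1, Fw2, F0, F1, F1, F1],
   [F1, Fw, F1, Fw, Fw2, Fw2, Fw2, Fw, Fw, Fw, F0, Fw],
   [F1, F0, F0, Fw2, Fw, Fw2, Fw, F1, Fw, Fw, F0, Fw],
   [F1, F0, F1, Fw2, Fw2, Fw, Fw2, F1, Fw, Fw, F1, Fw2],
   [F0, Fw, F1, Fw, Fw, Fw, Fw2, Fw, Fw2, Fw, F1, Fw2],
   [F1, Fw2, F0, Fw2, Fw2, Fw2, Fw2, Fw2, Fw, Fw2, F1, Fw],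
   [F1, F0, F1, Fw, Fw, Fw2, Fw2, F1, Fw2, Fw2, F1, Fw],
   [F0, F1, F0, F0, F1, F1, F0, F1, F0, F1, F1, F1],
   [F1, Fw, F0, F0, F1, F1, F1, Fw2, F0, F0, F1, F0],
   [F1, Fw2, F1, Fw2, Fw, Fw2, Fw2, Fw2, Fw2, Fw, F0, Fw2]]"

lemma ex1089: "\<exists>D. near_extremal_24 D \<and> weight_enumerator D = target 1089"
proof -
  have c: "3 * (goT1 0 (map tri A1089) 4 0 + goT1 5 (map tri (conjT A1089)) 3 0) = 1089"
    unfolding A1089_def by code_simp
  have o: "orth_chk A1089 \<and> orth_chk (transp A1089)" unfolding A1089_def by code_simp
  have l: "length A1089 = 12 \<and> list_all (\<lambda>r. length r = 12) A1089" unfolding A1089_def by code_simp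
  show ?thesis using inst2[of "A1089" 1089] c o l by simp
qed

definition A1197 :: "F4 list list" where
  "A1197 = [[F1, F0, F0, F1, F0, F1, F1, F1, F1, F1, F0, F0],
   [Fw2, Fw2, F1, Fw, F1, F0, F1, Fw, F0, Fw, Fw, F0],
   [F0, F1, F0, F1, F1, F1, F0, F1, F0, F1, F0, F1],
   [F1, F1, F1, F1, F1, F0, F0, F1, F1, F0, F0, F0],
   [F1, F1, F1, F0, F1, F0, F0, F0, F0, F1, F1, F1],
   [F0, F0, F0, F0, F1, F1, F1, F0, F1, F1, F1, F1],
   [F0, F1, F1, F0, F0, F1, F0, F1, F1, F1, F1, F0],
   [F1, F1, F0, F1, F0, F1, F0, F0, F1, F0, F1, F1],
   [Fw2, F1, F1, Fw, Fw2, F0, F1, F0, Fw, Fw, F0, Fw],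
   [F1, F0, F1, F1, F1, F1, F1, F0, F0, F0, F0, F1],
   [F1, F1, F0, F0, F1, F1, F1, F1, F0, F0, F1, F0],
   [F1, Fw2, F1, F0, Fw2, F0, F1, Fw, Fw, F0, Fw, Fw]]"

lemma ex1197: "\<exists>D. near_extremal_24 D \<and> weight_enumerator D = target 1197"
proof -
  have c: "3 * (goT1 0 (map tri A1197) 4 0 + goT1 5 (map tri (conjT A1197)) 3 0) = 1197"
    unfolding A1197_def by code_simp
  have o: "orth_chk A1197 \<and> orth_chk (transp A1197)" unfolding A1197_def by code_simp
  have l: "length A1197 = 12 \<and> list_all (\<lambda>r. length r = 12) A1197" unfolding A1197_def by code_simp
  show ?thesis using inst2[of "A1197" 1197] c o l by simp
qed

definition A1242 :: "F4 list list" where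
  "A1242 = [[Fw, Fw, F0, Fw, F1, F0, Fw, F1, Fw, F0, Fw2, Fw2],
   [F0, F1, Fw, F1, F0, Fw2, Fw2, F0, F0, F1, F1, F0],
   [F1, F0, Fw2, F1, F0, Fw, Fw2, F0, F0, F1, F0, F1],
   [Fw2, Fw, F0, Fw2, F1, F1, Fw, Fw2, Fw2, Fw2, Fw2, Fw2],
   [F0, F0, Fw, F1, F0, Fw, F1, F0, F0, Fw, Fw2, Fw2],
   [F0, F1, F0, F0, F1, F0, Fw, Fw, F1, F0, Fw, Fw2],
   [Fw2, Fw2, F0, Fw, F1, F1, Fw, Fw, Fw, Fw, Fw, Fw2],
   [F0, F0, F1, F0, F0, F1, F1, Fw2, F0, Fw, F1, F1],
   [F0, F1, F1, F1, F1, F0, F0, Fw, F1, Fw2, F0, F0],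
   [Fw2, Fw, F0, Fw, F1, F0, F0, Fw2, Fw2, F0, F0, F1],
   [Fw, Fw, Fw2, Fw, F0, Fw2, Fw2, F1, Fw2, Fw, F0, F0],
   [F1, F1, F1, F0, F1, F0, F0, Fw2, F0, Fw, F0, F1]]"

lemma ex1242: "\<exists>D. near_extremal_24 D \<and> weight_enumerator D = target 1242"
proof -
  have c: "3 * (goT1 0 (map tri A1242) 4 0 + goT1 5 (map tri (conjT A1242)) 3 0) = 1242"
    unfolding A1242_def by code_simp
  have o: "orth_chk A1242 \<and> orth_chk (transp A1242)" unfolding A1242_def by code_simp
  have l: "length A1242 = 12 \<and> list_all (\<lambda>r. length r = 12) A1242" unfolding A1242_def by code_simp
  show ?thesis using inst2[of "A1242" 1242] c o l by simp
qed

definition A1413 :: "F4 list list" where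
  "A1413 = [[F0, F1, F0, F1, Fw2, F1, Fw2, Fw2, Fw2, Fw2, F0, Fw2],
   [F1, F1, F1, F0, F0, F1, F1, F0, F1, F0, F1, F0],
   [F1, F1, F1, F1, Fw, F0, Fw, Fw, Fw, Fw, F1, Fw],
   [Fw2, F1, Fw2, F0, F0, Fw, Fw2, Fw2, F0, Fw, F0, F0],
   [Fw, F1, Fw2, F0, Fw, Fw, F1, F0, Fw, F0, F1, Fw2],
   [F0, F0, F0, F1, Fw2, F1, Fw, Fw2, Fw, Fw, F1, Fw],
   [F1, F0, F0, F1, F0, F1, F1, F0, F1, F1, F0, F1],
   [Fw, F1, Fw2, F0, F0, Fw, Fw, Fw, F1, Fw2, F1, F0],
   [Fw2, F1, Fw2, F0, Fw2, Fw, F0, F0, Fw2, F0, F0, Fw],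
   [Fw, F0, Fw2, F1, Fw2, Fw, F0, F0, Fw, F1, F1, Fw],
   [F0, F0, F1, F1, F1, F1, F0, F1, F0, F1, F0, F1],
   [Fw, F0, Fw2, F1, F0, Fw, Fw, Fw2, F0, Fw, F1, F1]]"

lemma ex1413: "\<exists>D. near_extremal_24 D \<and> weight_enumerator D = target 1413"
proof -
  have c: "3 * (goT1 0 (map tri A1413) 4 0 + goT1 5 (map tri (conjT A1413)) 3 0) = 1413"
    unfolding A1413_def by code_simp
  have o: "orth_chk A1413 \<and> orth_chk (transp A1413)" unfolding A1413_def by code_simp
  have l: "length A1413 = 12 \<and> list_all (\<lambda>r. length r = 12) A1413" unfolding A1413_def by code_simp
  show ?thesis using inst2[of "A1413" 1413] c o l by simp
qed

definition A2277 :: "F4 list list" where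
  "A2277 = [[F0, F1, F1, F1, F0, F1, F0, F1, F0, F1, F1, F0],
   [F1, F1, F1, F0, F0, F1, F1, F1, F1, F0, F0, F0],
   [F1, F0, F0, F1, F1, F1, F0, F1, F1, F0, F1, F0],
   [F1, F1, F0, F0, F1, F1, F0, F1, F0, F1, F0, F1],
   [F1, F0, F1, F0, F1, F0, F1, F1, F0, F1, F1, F0],
   [F1, F0, F1, F1, F0, F0, F0, F1, F1, F1, F0, F1],
   [F0, F0, F1, F1, F1, F1, F1, F1, F0, F0, F0, F1],
   [F0, F0, F0, F0, F0, F1, F1, F1, F1, F1, F1, F1],
   [F0, F1, F1, F0, F1, F0, F0, F1, F1, F0, F1, F1],
   [F1, F1, F0, F1, F0, F0, F1, F1, F0, F0, F1, F1],
   [F1, F1, F1, F1, F1, F1, F1, F0, F1, F1, F1, F1],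
   [F0, F1, F0, F1, F1, F0, F1, F1, F1, F1, F0, F0]]"

lemma ex2277: "\<exists>D. near_extremal_24 D \<and> weight_enumerator D = target 2277"
proof -
  have c: "3 * (goT1 0 (map tri A2277) 4 0 + goT1 5 (map tri (conjT A2277)) 3 0) = 2277"
    unfolding A2277_def by code_simp
  have o: "orth_chk A2277 \<and> orth_chk (transp A2277)" unfolding A2277_def by code_simp
  have l: "length A2277 = 12 \<and> list_all (\<lambda>r. length r = 12) A2277" unfolding A2277_def by code_simp
  show ?thesis using inst2[of "A2277" 2277] c o l by simp
qed


theorem proposition5p3:
  fixes \<alpha> :: int
  assumes "\<alpha> \<in> (\<lambda>\<beta>. 9 * \<beta>) ` {57,58,60,61,64,66,69,70,73,76,78,82,84,85,88,93,94,96,100,106,109,114,121,133,138,157,253}"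
  shows "\<exists>D. near_extremal_24 D \<and>
    weight_enumerator D =
      monom 1 0 + monom \<alpha> 8 + monom (18216 - 8*\<alpha>) 10 + monom (156492 + 28*\<alpha>) 12
      + monom (1147608 - 56*\<alpha>) 14 + monom (3736557 + 70*\<alpha>) 16 + monom (6248088 - 56*\<alpha>) 18
      + monom (4399164 + 28*\<alpha>) 20 + monom (1038312 - 8*\<alpha>) 22 + monom (32778 + \<alpha>) 24"
proof -
  have d: "\<alpha> = 513 \<or> \<alpha> = 522 \<or> \<alpha> = 540 \<or> \<alpha> = 549 \<or> \<alpha> = 576 \<or> \<alpha> = 594 \<or> \<alpha> = 621 \<or> \<alpha> = 630 \<or> \<alpha> = 657 \<or> \<alpha> = 684 \<or> \<alpha> = 702 \<or> \<alpha> = 738 \<or> \<alpha> = 756 \<or> \<alpha> = 765 \<or> \<alpha> = 792 \<or> \<alpha> = 837 \<or> \<alpha> = 846 \<or> \<alpha> = 864 \<or> \<alpha> = 900 \<or> \<alpha> = 954 \<or> \<alpha> = 981 \<or> \<alpha> = 1026 \<or> \<alpha> = 1089 \<or> \<alpha> = 1197 \<or> \<alpha> = 1242 \<or> \<alpha> = 1413 \<or> \<alpha> = 2277" using assms by auto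
  have "\<exists>D. near_extremal_24 D \<and> weight_enumerator D = target \<alpha>"
    using d ex513 ex522 ex540 ex549 ex576 ex594 ex621 ex630 ex657 ex684 ex702 ex738 ex756 ex765 ex792 ex837 ex846 ex864 ex900 ex954 ex981 ex1026 ex1089 ex1197 ex1242 ex1413 ex2277 by auto
  then show ?thesis by (simp add: target_def)
qed


end
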